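(* Consider the following setting and algorithm (the "MPTPT-based routing algorithm"). Network: a directed graph $G_0=(V_0,E_0)$ with $V_0=V_{sw}\cup V_{pm}$, $V_{sw}\cap V_{pm}=\emptyset$ (switch nodes and physical-machine (PM) nodes). Each PM $u\in V_{pm}$ is connected to exactly one switch by two links (one in each direction), and no switch is connected to more than one PM; for a switch $v$ attached to a PM we write $\hat v$ for that PM, and $V_{sw\rightarrow pm}\subseteq V_{sw}$ is the set of such switches. All other edges join two switches. Each edge $e$ has capacity $g(e)\ge 0$ and each PM $u$ has processing capacity $b(u)\ge 0$. There are $M$ commodities $com_i=\langle s_i,t_i,d_i,c_i\rangle$, $i=1,\dots,M$, with source $s_i\in V_{sw}$, destination $t_i\in V_{sw}$, demand $d_i>0$ and class $c_i\in\{1,\dots,C\}$, where $C$ is the number of distinct classes; a class $k$ has a per-unit processing cost $p(k)>0$. Let $V_T$ be the set of distinct destinations $\{t_1,\dots,t_M\}$. Step 1. Build $G_1=(V_1,E_1)$: delete the PM nodes and their incident edges, add $C$ new nodes $\mathcal P_1,\dots,\mathcal P_C$ (set $V_{\mathcal P}$), and add an edge $(v,\mathcal P_k)$ for every $v\in V_{sw\rightarrow pm}$ and every $k$. For $t=\mathcal P_k$ and $v\in V_{sw}$ let $d_t(v)$ be the total demand of commodities of class $k$ with source $v$ ($d_t(v)=0$ for $v\in V_{\mathcal P}$). Compute a basic feasible solution $(f_t(e))_{t\in V_{\mathcal P},e\in E_1}$ of the LP: minimize $\sum_{e\in E_1,t\in V_{\mathcal P}} f_t(e)$ subject to (i) for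 all $t\in V_{\mathcal P}$ and $v\in V_1$, $v\ne t$: $\sum_{(v,w)\in E_1}f_t(v,w)-\sum_{(u,v)\in E_1}f_t(u,v)=d_t(v)$; (ii) for all $e\in E_1\cap E_0$: $\sum_t f_t(e)\le g(e)$; (iii) for all $v\in V_{sw\rightarrow pm}$: $\sum_t f_t(v,t)\le\min\{g(v,\hat v),g(\hat v,v)\}$; (iv) for all $v\in V_{sw\rightarrow pm}$: $\sum_{t=\mathcal P_k} p(k) f_t(v,t)\le b(\hat v)$; (v) $f_t(e)\ge 0$. Then apply Flow2Trees$(t)$ (defined below) to this solution for every $t\in V_{\mathcal P}$. Step 2. Build $G_2=(V_2,E_2)$ from $G_1$ by deleting $V_{\mathcal P}$ and incident edges (so $V_2=V_{sw}$, $E_2=E_1\cap E_0$), with residual capacities $\bar g(e)=g(e)-\sum_t f_t(e)$ from the Step 1 solution. Form commodities for Step 2 whose sources lie in $V_{sw\rightarrow pm}$ and whose destinations lie in $V_T$: for each Step 1 tree carrying class-$c$ traffic from source $s$ through switch $v\in V_{sw\rightarrow pm}$, that traffic is split among the destinations $t$ of class-$c$ commodities with source $s$ in proportion to their demands, and becomes demand from $v$ to $t$; let $d_t(v)$ be the resulting total demand from $v$ to $t\in V_T$. Compute a basic feasible solution of the LP: minimize $\sum_{e\in E_2,t\in V_T}f_t(e)$ subject to flow conservation $\sum_{(v,w)\in E_2}f_t(v,w)-\sum_{(u,v)\in E_2}f_t(u,v)=d_t(v)$ for all $t\in V_T$, $v\in V_2$, $v\neq t$; $\sum_{t\in V_T}f_t(e)\le\bar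 g(e)$ for all $e\in E_2$; $f_t(e)\ge 0$. Then apply Flow2Trees$(t)$ for every $t\in V_T$. Flow2Trees$(t)$, given a graph, a root $t$ and a flow $f_t$ to $t$: while some source $s$ still has positive residual demand to $t$, construct, using only edges $e$ with $f_t(e)>0$, a multipoint-to-point tree $R$ (a tree with all edges oriented toward the root $t$) spanning all sources with residual demand to $t$, move as much flow as possible onto $R$ (i.e. route amounts from the sources along their paths in $R$, subtracting them from the residual demands and from $f_t$ on the edges used, keeping everything nonnegative, and maximizing the amount moved), and output $R$. Assume both LPs are feasible. Then the total number of multipoint-to-point trees produced by the algorithm (over both steps) is at most $C+2|E_0|+|V_T|-2|V_{pm}|$.
   Context: A multipoint-to-point tree rooted at a node $t$ is a directed tree in which every edge is oriented toward $t$; it is used to carry traffic from several sources to the single destination $t$. A basic feasible solution of an LP is a vertex of its feasible polyhedron. $|A|$ denotes the cardinality of a set $A$. *)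

theory Defs
  imports Complex_Main
begin

text \<open>Nodes of the Step-1 graph: switches (Sw v) and the new class nodes (Pn k), k = 1..C.\<close>
datatype 'v node1 = Sw 'v | Pn nat

definition swpm :: "'v set \<Rightarrow> 'v set \<Rightarrow> ('v \<times> 'v) set \<Rightarrow> 'v set" where
  "swpm Vsw Vpm E0 = {v \<in> Vsw. \<exists>u\<in>Vpm. (v, u) \<in> E0}"

definition hat :: "'v set \<Rightarrow> ('v \<times> 'v) set \<Rightarrow> 'v \<Rightarrow> 'v" where
  "hat Vpm E0 v = (THE u. u \<in> Vpm \<and> (v, u) \<in> E0)"

definition network ::
  "'v set \<Rightarrow> 'v set \<Rightarrow> ('v \<times> 'v) set \<Rightarrow> ('v \<times> 'v \<Rightarrow> real) \<Rightarrow> ('v \<Rightarrow> real) \<Rightarrow> bool" where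
  "network Vsw Vpm E0 g b \<longleftrightarrow>
     finite Vsw \<and> finite Vpm \<and> Vsw \<inter> Vpm = {} \<and>
     E0 \<subseteq> (Vsw \<union> Vpm) \<times> (Vsw \<union> Vpm) \<and>
     (\<forall>u\<in>Vpm. \<exists>v\<in>Vsw. {e \<in> E0. fst e = u \<or> snd e = u} = {(u, v), (v, u)}) \<and>
     (\<forall>v\<in>Vsw. card {u \<in> Vpm. (v, u) \<in> E0 \<or> (u, v) \<in> E0} \<le> 1) \<and>
     (\<forall>e\<in>E0. 0 \<le> g e) \<and> (\<forall>u\<in>Vpm. 0 \<le> b u)"

definition commodities ::
  "'v set \<Rightarrow> nat \<Rightarrow> (nat \<Rightarrow> 'v) \<Rightarrow> (nat \<Rightarrow> 'v) \<Rightarrow> (nat \<Rightarrow> real) \<Rightarrow> (nat \<Rightarrow> nat) \<Rightarrow> nat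
     \<Rightarrow> (nat \<Rightarrow> real) \<Rightarrow> bool" where
  "commodities Vsw M src dst dem cl C p \<longleftrightarrow>
     (\<forall>i\<in>{1..M}. src i \<in> Vsw \<and> dst i \<in> Vsw \<and> 0 < dem i \<and> cl i \<in> {1..C}) \<and>
     cl ` {1..M} = {1..C} \<and> (\<forall>k\<in>{1..C}. 0 < p k)"

definition E2 :: "'v set \<Rightarrow> ('v \<times> 'v) set \<Rightarrow> ('v \<times> 'v) set" where
  "E2 Vsw E0 = {e \<in> E0. fst e \<in> Vsw \<and> snd e \<in> Vsw}"

definition V1 :: "'v set \<Rightarrow> nat \<Rightarrow> 'v node1 set" where
  "V1 Vsw C = Sw ` Vsw \<union> Pn ` {1..C}"

definition E1 :: "'v set \<Rightarrow> 'v set \<Rightarrow> ('v \<times> 'v) set \<Rightarrow> nat \<Rightarrow> ('v node1 \<times> 'v node1) set" where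
  "E1 Vsw Vpm E0 C = (\<lambda>(u, w). (Sw u, Sw w)) ` E2 Vsw E0
      \<union> {(Sw v, Pn k) | v k. v \<in> swpm Vsw Vpm E0 \<and> k \<in> {1..C}}"

fun d1 :: "nat \<Rightarrow> (nat \<Rightarrow> 'v) \<Rightarrow> (nat \<Rightarrow> real) \<Rightarrow> (nat \<Rightarrow> nat) \<Rightarrow> 'v node1 \<Rightarrow> 'v node1 \<Rightarrow> real" where
  "d1 M src dem cl (Pn k) (Sw w) = (\<Sum>i\<in>{i\<in>{1..M}. cl i = k \<and> src i = w}. dem i)"
| "d1 M src dem cl _ _ = 0"

definition conservation ::
  "'n set \<Rightarrow> ('n \<times> 'n) set \<Rightarrow> 'n set \<Rightarrow> ('n \<Rightarrow> 'n \<Rightarrow> real) \<Rightarrow> ('n \<Rightarrow> 'n \<times> 'n \<Rightarrow> real) \<Rightarrow> bool" where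
  "conservation V E T d f \<longleftrightarrow>
     (\<forall>t\<in>T. \<forall>v\<in>V. v \<noteq> t \<longrightarrow>
        (\<Sum>w\<in>{w. (v, w) \<in> E}. f t (v, w)) - (\<Sum>u\<in>{u. (u, v) \<in> E}. f t (u, v)) = d t v)"

text \<open>Feasible polyhedron of the Step-1 LP (variables f t e for t in V_P, e in E_1;
  all other coordinates are fixed to 0).\<close>
definition lp1_set ::
  "'v set \<Rightarrow> 'v set \<Rightarrow> ('v \<times> 'v) set \<Rightarrow> ('v \<times> 'v \<Rightarrow> real) \<Rightarrow> ('v \<Rightarrow> real) \<Rightarrow> nat \<Rightarrow> (nat \<Rightarrow> 'v)
     \<Rightarrow> (nat \<Rightarrow> real) \<Rightarrow> (nat \<Rightarrow> nat) \<Rightarrow> nat \<Rightarrow> (nat \<Rightarrow> real)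
     \<Rightarrow> ('v node1 \<Rightarrow> 'v node1 \<times> 'v node1 \<Rightarrow> real) set" where
  "lp1_set Vsw Vpm E0 g b M src dem cl C p =
     {f. (\<forall>t e. (t \<notin> Pn ` {1..C} \<or> e \<notin> E1 Vsw Vpm E0 C) \<longrightarrow> f t e = 0)
       \<and> conservation (V1 Vsw C) (E1 Vsw Vpm E0 C) (Pn ` {1..C}) (d1 M src dem cl) f
       \<and> (\<forall>e\<in>E2 Vsw E0. (\<Sum>t\<in>Pn ` {1..C}. f t (Sw (fst e), Sw (snd e))) \<le> g e)
       \<and> (\<forall>v\<in>swpm Vsw Vpm E0. (\<Sum>k\<in>{1..C}. f (Pn k) (Sw v, Pn k))
             \<le> min (g (v, hat Vpm E0 v)) (g (hat Vpm E0 v, v)))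
       \<and> (\<forall>v\<in>swpm Vsw Vpm E0. (\<Sum>k\<in>{1..C}. p k * f (Pn k) (Sw v, Pn k)) \<le> b (hat Vpm E0 v))
       \<and> (\<forall>t e. 0 \<le> f t e)}"

definition lp2_set ::
  "'v set \<Rightarrow> ('v \<times> 'v) set \<Rightarrow> 'v set \<Rightarrow> ('v \<Rightarrow> 'v \<Rightarrow> real) \<Rightarrow> ('v \<times> 'v \<Rightarrow> real)
     \<Rightarrow> ('v \<Rightarrow> 'v \<times> 'v \<Rightarrow> real) set" where
  "lp2_set V E T d gbar =
     {f. (\<forall>t e. (t \<notin> T \<or> e \<notin> E) \<longrightarrow> f t e = 0)
       \<and> conservation V E T d f
       \<and> (\<forall>e\<in>E. (\<Sum>t\<in>T. f t e) \<le> gbar e)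
       \<and> (\<forall>t e. 0 \<le> f t e)}"

text \<open>Basic feasible solution = vertex (extreme point) of the feasible polyhedron.\<close>
definition is_vertex :: "('a \<Rightarrow> 'b \<Rightarrow> real) set \<Rightarrow> ('a \<Rightarrow> 'b \<Rightarrow> real) \<Rightarrow> bool" where
  "is_vertex P f \<longleftrightarrow> f \<in> P \<and>
     (\<forall>g\<in>P. \<forall>h\<in>P. \<forall>u::real. 0 < u \<and> u < 1 \<and> f = (\<lambda>t e. u * g t e + (1 - u) * h t e) \<longrightarrow> g = h)"

definition mp_tree :: "('n \<times> 'n) set \<Rightarrow> 'n \<Rightarrow> ('n \<times> 'n) set \<Rightarrow> bool" where
  "mp_tree E t R \<longleftrightarrow> R \<subseteq> E \<and> finite R \<and>
     (\<forall>(u, w)\<in>R. u \<noteq> t) \<and>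
     (\<forall>u w w'. (u, w) \<in> R \<longrightarrow> (u, w') \<in> R \<longrightarrow> w = w') \<and>
     (\<forall>(u, w)\<in>R. (u, t) \<in> trancl R)"

definition srcs :: "'n set \<Rightarrow> 'n \<Rightarrow> ('n \<Rightarrow> real) \<Rightarrow> 'n set" where
  "srcs V t r = {v \<in> V. v \<noteq> t \<and> 0 < r v}"

text \<open>Amount placed on tree edge e when each source s sends a s along its path in R.\<close>
definition tree_load :: "('n \<times> 'n) set \<Rightarrow> 'n set \<Rightarrow> ('n \<Rightarrow> real) \<Rightarrow> 'n \<times> 'n \<Rightarrow> real" where
  "tree_load R S a e = (\<Sum>s\<in>S. if (s, fst e) \<in> rtrancl R then a s else 0)"

definition routing_ok ::
  "('n \<times> 'n) set \<Rightarrow> 'n set \<Rightarrow> ('n \<times> 'n \<Rightarrow> real) \<Rightarrow> ('n \<Rightarrow> real) \<Rightarrow> ('n \<Rightarrow> real) \<Rightarrow> bool" where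
  "routing_ok R S f r a \<longleftrightarrow> (\<forall>s\<in>S. 0 \<le> a s \<and> a s \<le> r s) \<and> (\<forall>s. s \<notin> S \<longrightarrow> a s = 0)
     \<and> (\<forall>e\<in>R. tree_load R S a e \<le> f e)"

definition max_routing ::
  "('n \<times> 'n) set \<Rightarrow> 'n set \<Rightarrow> ('n \<times> 'n \<Rightarrow> real) \<Rightarrow> ('n \<Rightarrow> real) \<Rightarrow> ('n \<Rightarrow> real) \<Rightarrow> bool" where
  "max_routing R S f r a \<longleftrightarrow> routing_ok R S f r a \<and>
     (\<forall>a'. routing_ok R S f r a' \<longrightarrow> sum a' S \<le> sum a S)"

text \<open>flow2trees V E t f r out: a complete run of Flow2Trees(t) on graph (V,E) starting
  from flow f and residual demands r, outputting the list of trees together with the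
  amounts routed on each.\<close>
inductive flow2trees ::
  "'n set \<Rightarrow> ('n \<times> 'n) set \<Rightarrow> 'n \<Rightarrow> ('n \<times> 'n \<Rightarrow> real) \<Rightarrow> ('n \<Rightarrow> real)
     \<Rightarrow> (('n \<times> 'n) set \<times> ('n \<Rightarrow> real)) list \<Rightarrow> bool"
  for V E t where
  stop: "srcs V t r = {} \<Longrightarrow> flow2trees V E t f r []"
| step: "srcs V t r \<noteq> {} \<Longrightarrow> mp_tree E t R \<Longrightarrow> R \<subseteq> {e. 0 < f e} \<Longrightarrow>
         (\<forall>s\<in>srcs V t r. (s, t) \<in> trancl R) \<Longrightarrow>
         max_routing R (srcs V t r) f r a \<Longrightarrow>
         flow2trees V E t (\<lambda>e. if e \<in> R then f e - tree_load R (srcs V t r) a e else f e)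
                          (\<lambda>v. r v - a v) rest \<Longrightarrow>
         flow2trees V E t f r ((R, a) # rest)"

definition gbar :: "'v set \<Rightarrow> nat \<Rightarrow> ('v \<times> 'v \<Rightarrow> real) \<Rightarrow> ('v node1 \<Rightarrow> 'v node1 \<times> 'v node1 \<Rightarrow> real)
     \<Rightarrow> 'v \<times> 'v \<Rightarrow> real" where
  "gbar Vsw C g f1 e = g e - (\<Sum>t\<in>Pn ` {1..C}. f1 t (Sw (fst e), Sw (snd e)))"

definition Dcst :: "nat \<Rightarrow> (nat \<Rightarrow> 'v) \<Rightarrow> (nat \<Rightarrow> 'v) \<Rightarrow> (nat \<Rightarrow> real) \<Rightarrow> (nat \<Rightarrow> nat)
     \<Rightarrow> nat \<Rightarrow> 'v \<Rightarrow> 'v \<Rightarrow> real" where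
  "Dcst M src dst dem cl k s t = (\<Sum>i\<in>{i\<in>{1..M}. cl i = k \<and> src i = s \<and> dst i = t}. dem i)"

definition Dcs :: "nat \<Rightarrow> (nat \<Rightarrow> 'v) \<Rightarrow> (nat \<Rightarrow> real) \<Rightarrow> (nat \<Rightarrow> nat) \<Rightarrow> nat \<Rightarrow> 'v \<Rightarrow> real" where
  "Dcs M src dem cl k s = (\<Sum>i\<in>{i\<in>{1..M}. cl i = k \<and> src i = s}. dem i)"

text \<open>Step-2 demand d2 t v from switch v to destination t: class-k traffic from source s
  leaving through v (last hop (v, Pn k)) in a Step-1 tree is split among destinations in
  proportion to the class-k demands from s.\<close>
definition d2 :: "'v set \<Rightarrow> nat \<Rightarrow> (nat \<Rightarrow> 'v) \<Rightarrow> (nat \<Rightarrow> 'v) \<Rightarrow> (nat \<Rightarrow> real) \<Rightarrow> (nat \<Rightarrow> nat)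
     \<Rightarrow> nat \<Rightarrow> (nat \<Rightarrow> (('v node1 \<times> 'v node1) set \<times> ('v node1 \<Rightarrow> real)) list)
     \<Rightarrow> 'v \<Rightarrow> 'v \<Rightarrow> real" where
  "d2 Vsw M src dst dem cl C runs1 t v =
     (\<Sum>k\<in>{1..C}. sum_list (map (\<lambda>(R, a).
        (\<Sum>s\<in>Vsw. if (Sw s, Sw v) \<in> rtrancl R \<and> (Sw v, Pn k) \<in> R
                   then a (Sw s) * Dcst M src dst dem cl k s t / Dcs M src dem cl k s else 0))
        (runs1 k)))"

end

theory Submission
  imports Defs
begin


lemma dep_exists:
  fixes u :: "'j \<Rightarrow> 'r \<Rightarrow> real"
  assumes "finite Rw" "finite J" "card Rw < card J"
  shows "\<exists>c. (\<forall>x\<in>Rw. (\<Sum>j\<in>J. c j * u j x) = 0) \<and> (\<exists>j\<in>J. c j \<noteq> 0)"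
  using assms
proof (induction Rw arbitrary: J u rule: finite_induct)
  case empty
  then have "J \<noteq> {}" by auto
  then show ?case by (rule_tac x="\<lambda>_. 1" in exI) auto
next
  case (insert r Rw)
  show ?case
  proof (cases "\<forall>j\<in>J. u j r = 0")
    case True
    from insert have "card Rw < card J" by simp
    from insert.IH[OF insert.prems(1) this] obtain c where
      c: "\<forall>x\<in>Rw. (\<Sum>j\<in>J. c j * u j x) = 0" "\<exists>j\<in>J. c j \<noteq> 0" by blast
    then show ?thesis using True by (rule_tac x=c in exI) auto
  next
    case False
    then obtain j0 where j0: "j0 \<in> J" "u j0 r \<noteq> 0" by blast
    define J' where "J' = J - {j0}"
    define u' where "u' j x = u j x - (u j r / u j0 r) * u j0 x" for j x
    have fJ': "finite J'" using insert by (simp add: J'_def)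
    have cJ': "card Rw < card J'" using insert j0 by (simp add: J'_def)
    from insert.IH[OF fJ' cJ', of u'] obtain c' where
      c': "\<forall>x\<in>Rw. (\<Sum>j\<in>J'. c' j * u' j x) = 0" "\<exists>j\<in>J'. c' j \<noteq> 0" by blast
    define c where "c j = (if j = j0 then - (\<Sum>j\<in>J'. c' j * u j r) / u j0 r else c' j)" for j
    have eq: "(\<Sum>j\<in>J. c j * u j x) = (\<Sum>j\<in>J'. c' j * u' j x)" for x
    proof -
      have "(\<Sum>j\<in>J. c j * u j x) = c j0 * u j0 x + (\<Sum>j\<in>J'. c j * u j x)"
        using j0 insert.prems(1) by (simp add: J'_def sum.remove)
      also have "(\<Sum>j\<in>J'. c j * u j x) = (\<Sum>j\<in>J'. c' j * u j x)"
        by (rule sum.cong) (auto simp: c_def J'_def)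
      also have "(\<Sum>j\<in>J'. c' j * u' j x) = (\<Sum>j\<in>J'. c' j * u j x) - (\<Sum>j\<in>J'. c' j * u j r) / u j0 r * u j0 x"
      proof -
        have "(\<Sum>j\<in>J'. c' j * u' j x) = (\<Sum>j\<in>J'. c' j * u j x - (c' j * u j r / u j0 r) * u j0 x)"
          by (rule sum.cong) (auto simp: u'_def algebra_simps)
        also have "\<dots> = (\<Sum>j\<in>J'. c' j * u j x) - (\<Sum>j\<in>J'. c' j * u j r / u j0 r) * u j0 x"
          by (simp add: sum_subtractf sum_distrib_right)
        also have "(\<Sum>j\<in>J'. c' j * u j r / u j0 r) = (\<Sum>j\<in>J'. c' j * u j r) / u j0 r"
          by (simp add: sum_divide_distrib)
        finally show ?thesis .
      qed
      ultimately show ?thesis by (simp add: c_def algebra_simps)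
    qed
    have "(\<Sum>j\<in>J'. c' j * u' j r) = 0" using j0 by (simp add: u'_def)
    then have "\<forall>x\<in>insert r Rw. (\<Sum>j\<in>J. c j * u j x) = 0" using c'(1) eq by auto
    moreover have "\<exists>j\<in>J. c j \<noteq> 0" using c'(2) by (auto simp: c_def J'_def)
    ultimately show ?thesis by blast
  qed
qed

lemma indep_card_le:
  fixes u :: "'j \<Rightarrow> 'r \<Rightarrow> real"
  assumes "finite Rw" "finite J"
    and "\<forall>c. (\<forall>x\<in>Rw. (\<Sum>j\<in>J. c j * u j x) = 0) \<longrightarrow> (\<forall>j\<in>J. c j = 0)"
  shows "card J \<le> card Rw"
  using dep_exists[OF assms(1,2), of u] assms(3) by (meson not_le)



locale mpt =
  fixes E :: "('n \<times> 'n) set" and t :: 'n and R :: "('n \<times> 'n) set"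
  assumes mp: "mp_tree E t R"
begin

lemma RE: "R \<subseteq> E" and finR: "finite R" and notail_t: "(t, w) \<notin> R"
  and func: "(u, w) \<in> R \<Longrightarrow> (u, w') \<in> R \<Longrightarrow> w = w'"
  and reach: "(u, w) \<in> R \<Longrightarrow> (u, t) \<in> R\<^sup>+"
  using mp unfolding mp_tree_def by auto

lemma lin: "(s, x) \<in> R\<^sup>* \<Longrightarrow> (s, y) \<in> R\<^sup>* \<Longrightarrow> (x, y) \<in> R\<^sup>* \<or> (y, x) \<in> R\<^sup>*"
proof (induction arbitrary: y rule: rtrancl_induct)
  case base
  then show ?case by simp
next
  case (step x z)
  from step.IH[OF step.prems] show ?case
  proof
    assume "(x, y) \<in> R\<^sup>*"
    then show ?thesis
    proof (cases rule: converse_rtranclE)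
      case base
      then show ?thesis using step by auto
    next
      case (step x')
      with func[OF \<open>(x, z) \<in> R\<close>] show ?thesis by auto
    qed
  next
    assume "(y, x) \<in> R\<^sup>*"
    then show ?thesis using step by (meson rtrancl.rtrancl_into_rtrancl)
  qed
qed

lemma cyc_back: assumes c: "(x, x) \<in> R\<^sup>+" and xy: "(x, y) \<in> R\<^sup>*" shows "(y, x) \<in> R\<^sup>*"
  using xy
proof (induction rule: rtrancl_induct)
  case (step y z)
  then have yx: "(y, x) \<in> R\<^sup>*" by auto
  show ?case
  proof (cases "y = x")
    case True
    from c True have "(x, x) \<in> R\<^sup>+" by simp
    then obtain z' where "(x, z') \<in> R" "(z', x) \<in> R\<^sup>*" by (meson converse_tranclE trancl_into_rtrancl rtrancl.rtrancl_refl)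
    then show ?thesis using func[of x z z'] step True by auto
  next
    case False
    with yx have "(y, x) \<in> R\<^sup>+" by (auto simp: rtrancl_eq_or_trancl)
    then obtain z' where "(y, z') \<in> R" "(z', x) \<in> R\<^sup>*" by (meson converse_tranclE trancl_into_rtrancl rtrancl.rtrancl_refl)
    then show ?thesis using func[of y z z'] step by auto
  qed
qed simp

lemma acyc: "(x, x) \<notin> R\<^sup>+"
proof
  assume c: "(x, x) \<in> R\<^sup>+"
  then obtain x' where "(x, x') \<in> R" by (meson converse_tranclE)
  then have xt: "(x, t) \<in> R\<^sup>+" by (rule reach)
  have "x \<noteq> t" using \<open>(x, x') \<in> R\<close> notail_t by auto
  have "(t, x) \<in> R\<^sup>*" using cyc_back[OF c] xt by (auto dest: trancl_into_rtrancl)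
  with \<open>x \<noteq> t\<close> have "(t, x) \<in> R\<^sup>+" by (auto simp: rtrancl_eq_or_trancl)
  then obtain w where "(t, w) \<in> R" by (meson converse_tranclE)
  with notail_t show False by simp
qed

lemma pred_card:
  "card {u. (u, v) \<in> R \<and> (s, u) \<in> R\<^sup>*} = (if (s, v) \<in> R\<^sup>* \<and> s \<noteq> v then 1 else 0)"
proof (cases "(s, v) \<in> R\<^sup>* \<and> s \<noteq> v")
  case True
  then have "(s, v) \<in> R\<^sup>+" by (auto simp: rtrancl_eq_or_trancl)
  then obtain u where u: "(s, u) \<in> R\<^sup>*" "(u, v) \<in> R" by (meson tranclD2)
  have "{u. (u, v) \<in> R \<and> (s, u) \<in> R\<^sup>*} = {u}"
  proof safe
    fix u' assume u': "(u', v) \<in> R" "(s, u') \<in> R\<^sup>*"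
    show "u' = u"
    proof (rule ccontr)
      assume ne: "u' \<noteq> u"
      from lin[OF u(1) u'(2)] show False
      proof
        assume "(u, u') \<in> R\<^sup>*"
        with ne have "(u, u') \<in> R\<^sup>+" by (auto simp: rtrancl_eq_or_trancl)
        then obtain z where "(u, z) \<in> R" "(z, u') \<in> R\<^sup>*" by (meson converse_tranclE trancl_into_rtrancl rtrancl.rtrancl_refl)
        with func[OF u(2)] have "(v, u') \<in> R\<^sup>*" by auto
        with u'(1) have "(v, v) \<in> R\<^sup>+" by auto
        with acyc show False by simp
      next
        assume "(u', u) \<in> R\<^sup>*"
        with ne have "(u', u) \<in> R\<^sup>+" by (auto simp: rtrancl_eq_or_trancl)
        then obtain z where "(u', z) \<in> R" "(z, u) \<in> R\<^sup>*" by (meson converse_tranclE trancl_into_rtrancl rtrancl.rtrancl_refl)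
        with func[OF u'(1)] have "(v, u) \<in> R\<^sup>*" by auto
        with u(2) have "(v, v) \<in> R\<^sup>+" by auto
        with acyc show False by simp
      qed
    qed
  qed (use u in auto)
  then show ?thesis using True by simp
next
  case False
  have "{u. (u, v) \<in> R \<and> (s, u) \<in> R\<^sup>*} = {}"
  proof safe
    fix u assume u: "(u, v) \<in> R" "(s, u) \<in> R\<^sup>*"
    then have "(s, v) \<in> R\<^sup>*" by auto
    with False have "s = v" by auto
    with u have "(v, v) \<in> R\<^sup>+" by auto
    with acyc show "u \<in> {}" by simp
  qed
  then show ?thesis using False by (simp only: if_False card.empty)
qed

end

lemma sum_if_const: "finite U \<Longrightarrow> (\<Sum>u\<in>U. if P u then (c::real) else 0) = c * card {u\<in>U. P u}"
  by (simp add: sum.inter_filter[symmetric])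

lemma fin_succ: "finite E \<Longrightarrow> finite {w. (v, w) \<in> E}"
proof -
  assume f: "finite E"
  have "{w. (v, w) \<in> E} \<subseteq> snd ` E" by (auto intro: rev_image_eqI)
  then show ?thesis using f by (meson finite_imageI finite_subset)
qed

lemma fin_pred: "finite E \<Longrightarrow> finite {u. (u, v) \<in> E}"
proof -
  assume f: "finite E"
  have "{u. (u, v) \<in> E} \<subseteq> fst ` E" by (auto intro: rev_image_eqI)
  then show ?thesis using f by (meson finite_imageI finite_subset)
qed

lemma (in mpt) tree_cons:
  assumes finE: "finite E" and finS: "finite S" and Sr: "\<forall>s\<in>S. (s, t) \<in> R\<^sup>+" and vt: "v \<noteq> t"
  shows "(\<Sum>w\<in>{w. (v, w) \<in> E}. if (v, w) \<in> R then tree_load R S a (v, w) else 0)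
       - (\<Sum>u\<in>{u. (u, v) \<in> E}. if (u, v) \<in> R then tree_load R S a (u, v) else 0)
       = (if v \<in> S then a v else 0)"
proof -
  define A where "A = (\<Sum>s\<in>S. if (s, v) \<in> R\<^sup>* then a s else 0)"
  define B where "B = (\<Sum>s\<in>S. if (s, v) \<in> R\<^sup>* \<and> s \<noteq> v then a s else 0)"
  have fW: "finite {w. (v, w) \<in> E}" by (rule fin_succ[OF finE])
  have fU: "finite {u. (u, v) \<in> E}" by (rule fin_pred[OF finE])
  have out: "(\<Sum>w\<in>{w. (v, w) \<in> E}. if (v, w) \<in> R then tree_load R S a (v, w) else 0)
        = A * card {w. (v, w) \<in> R}"
  proof -
    have "(\<Sum>w\<in>{w. (v, w) \<in> E}. if (v, w) \<in> R then tree_load R S a (v, w) else 0)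
        = (\<Sum>w\<in>{w. (v, w) \<in> E}. if (v, w) \<in> R then A else 0)"
      by (rule sum.cong) (auto simp: tree_load_def A_def)
    also have "\<dots> = A * card {w\<in>{w. (v, w) \<in> E}. (v, w) \<in> R}" by (rule sum_if_const[OF fW])
    also have "{w\<in>{w. (v, w) \<in> E}. (v, w) \<in> R} = {w. (v, w) \<in> R}" using RE by auto
    finally show ?thesis .
  qed
  have inn: "(\<Sum>u\<in>{u. (u, v) \<in> E}. if (u, v) \<in> R then tree_load R S a (u, v) else 0) = B"
  proof -
    have "(\<Sum>u\<in>{u. (u, v) \<in> E}. if (u, v) \<in> R then tree_load R S a (u, v) else 0)
        = (\<Sum>u\<in>{u. (u, v) \<in> E}. \<Sum>s\<in>S. if (u, v) \<in> R \<and> (s, u) \<in> R\<^sup>* then a s else 0)"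
      by (rule sum.cong) (auto simp: tree_load_def)
    also have "\<dots> = (\<Sum>s\<in>S. \<Sum>u\<in>{u. (u, v) \<in> E}. if (u, v) \<in> R \<and> (s, u) \<in> R\<^sup>* then a s else 0)"
      by (rule sum.swap)
    also have "\<dots> = (\<Sum>s\<in>S. a s * card {u. (u, v) \<in> R \<and> (s, u) \<in> R\<^sup>*})"
    proof (rule sum.cong[OF refl])
      fix s
      have "(\<Sum>u\<in>{u. (u, v) \<in> E}. if (u, v) \<in> R \<and> (s, u) \<in> R\<^sup>* then a s else 0)
          = a s * card {u\<in>{u. (u, v) \<in> E}. (u, v) \<in> R \<and> (s, u) \<in> R\<^sup>*}" by (rule sum_if_const[OF fU])
      also have "{u\<in>{u. (u, v) \<in> E}. (u, v) \<in> R \<and> (s, u) \<in> R\<^sup>*} = {u. (u, v) \<in> R \<and> (s, u) \<in> R\<^sup>*}"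
        using RE by auto
      finally show "(\<Sum>u\<in>{u. (u, v) \<in> E}. if (u, v) \<in> R \<and> (s, u) \<in> R\<^sup>* then a s else 0)
          = a s * card {u. (u, v) \<in> R \<and> (s, u) \<in> R\<^sup>*}" .
    qed
    also have "\<dots> = B" unfolding B_def by (rule sum.cong[OF refl]) (simp add: pred_card)
    finally show ?thesis .
  qed
  show ?thesis
  proof (cases "\<exists>w. (v, w) \<in> R")
    case True
    then obtain w where w: "(v, w) \<in> R" by blast
    have "{w. (v, w) \<in> R} = {w}" using func[OF w] w by blast
    then have eq1: "A * card {w. (v, w) \<in> R} = A" by simp
    have "A - B = (\<Sum>s\<in>S. (if (s, v) \<in> R\<^sup>* then a s else 0) - (if (s, v) \<in> R\<^sup>* \<and> s \<noteq> v then a s else 0))"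
      unfolding A_def B_def by (simp only: sum_subtractf)
    also have "\<dots> = (\<Sum>s\<in>S. if s = v then a s else 0)"
      by (rule sum.cong[OF refl]) auto
    also have "\<dots> = (if v \<in> S then a v else 0)"
      using finS by (simp add: sum.delta')
    finally show ?thesis unfolding out inn eq1 .
  next
    case False
    then have "{w. (v, w) \<in> R} = {}" by blast
    then have c0: "card {w. (v, w) \<in> R} = 0" by simp
    have vS: "v \<notin> S"
    proof
      assume "v \<in> S"
      then have "(v, t) \<in> R\<^sup>+" using Sr by auto
      then obtain w where "(v, w) \<in> R" by (meson converse_tranclE)
      with False show False by blast
    qed
    have "B = 0" unfolding B_def
    proof (rule sum.neutral, rule ballI)
      fix s assume "s \<in> S"
      show "(if (s, v) \<in> R\<^sup>* \<and> s \<noteq> v then a s else 0) = 0"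
      proof (rule ccontr)
        assume "(if (s, v) \<in> R\<^sup>* \<and> s \<noteq> v then a s else 0) \<noteq> 0"
        then have "(s, v) \<in> R\<^sup>+" by (auto simp: rtrancl_eq_or_trancl split: if_splits)
        then obtain u where u: "(s, u) \<in> R\<^sup>*" "(u, v) \<in> R" by (meson tranclD2)
        then have "(u, t) \<in> R\<^sup>+" by (rule_tac reach)
        then obtain z where "(u, z) \<in> R" "(z, t) \<in> R\<^sup>*" by (meson converse_tranclE trancl_into_rtrancl rtrancl.rtrancl_refl)
        with func[OF u(2)] have "(v, t) \<in> R\<^sup>*" by auto
        with vt have "(v, t) \<in> R\<^sup>+" by (auto simp: rtrancl_eq_or_trancl)
        then obtain w where "(v, w) \<in> R" by (meson converse_tranclE)
        with False show False by blast
      qed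
    qed
    show ?thesis unfolding out inn c0 using vS \<open>B = 0\<close> by simp
  qed
qed



definition cons_at :: "'n set \<Rightarrow> ('n \<times> 'n) set \<Rightarrow> 'n \<Rightarrow> ('n \<Rightarrow> real) \<Rightarrow> ('n \<times> 'n \<Rightarrow> real) \<Rightarrow> bool" where
  "cons_at V E t d f \<longleftrightarrow> (\<forall>v\<in>V. v \<noteq> t \<longrightarrow>
     (\<Sum>w\<in>{w. (v, w) \<in> E}. f (v, w)) - (\<Sum>u\<in>{u. (u, v) \<in> E}. f (u, v)) = d v)"

lemma tl_update:
  assumes "finite S" "s' \<in> S"
  shows "tree_load R S (a(s' := x)) e = tree_load R S a e + (if (s', fst e) \<in> R\<^sup>* then x - a s' else 0)"
proof -
  have "tree_load R S (a(s' := x)) e = (if (s', fst e) \<in> R\<^sup>* then x else 0) + (\<Sum>s\<in>S - {s'}. if (s, fst e) \<in> R\<^sup>* then a s else 0)"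
  proof -
    have "(\<Sum>s\<in>S - {s'}. if (s, fst e) \<in> R\<^sup>* then (a(s' := x)) s else 0) = (\<Sum>s\<in>S - {s'}. if (s, fst e) \<in> R\<^sup>* then a s else 0)"
      by (rule sum.cong) auto
    then show ?thesis unfolding tree_load_def using assms by (simp add: sum.remove)
  qed
  moreover have "tree_load R S a e = (if (s', fst e) \<in> R\<^sup>* then a s' else 0) + (\<Sum>s\<in>S - {s'}. if (s, fst e) \<in> R\<^sup>* then a s else 0)"
    unfolding tree_load_def using assms by (simp add: sum.remove)
  ultimately show ?thesis by simp
qed

lemma tl_nonneg: "\<forall>s\<in>S. 0 \<le> a s \<Longrightarrow> 0 \<le> tree_load R S a e"
  unfolding tree_load_def by (rule sum_nonneg) auto

lemma blocked:
  assumes fin: "finite S" "finite R" and sS: "s' \<in> S" and lt: "a s' < r s'"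
    and mr: "max_routing R S f r a"
  shows "\<exists>e\<in>R. (s', fst e) \<in> R\<^sup>* \<and> tree_load R S a e = f e"
proof (rule ccontr)
  assume "\<not> ?thesis"
  then have strict: "\<forall>e\<in>R. (s', fst e) \<in> R\<^sup>* \<longrightarrow> tree_load R S a e < f e"
    using mr unfolding max_routing_def routing_ok_def by (meson order_le_less)
  define K where "K = {e\<in>R. (s', fst e) \<in> R\<^sup>*}"
  have fK: "finite K" using fin by (simp add: K_def)
  define \<delta> where "\<delta> = Min (insert (r s' - a s') ((\<lambda>e. f e - tree_load R S a e) ` K))"
  have dpos: "0 < \<delta>" unfolding \<delta>_def using fK lt strict by (auto simp: K_def)
  have dle1: "\<delta> \<le> r s' - a s'" unfolding \<delta>_def using fK by simp
  have dle2: "\<delta> \<le> f e - tree_load R S a e" if "e \<in> K" for e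
    unfolding \<delta>_def using fK that by simp
  define a' where "a' = a(s' := a s' + \<delta>)"
  have ro: "routing_ok R S f r a" using mr by (simp add: max_routing_def)
  have "routing_ok R S f r a'"
    unfolding routing_ok_def
  proof (intro conjI ballI allI impI)
    fix s assume "s \<in> S"
    then show "0 \<le> a' s" "a' s \<le> r s" using ro dpos dle1 unfolding routing_ok_def a'_def by auto
  next
    fix s assume "s \<notin> S"
    then show "a' s = 0" using ro sS unfolding routing_ok_def a'_def by auto
  next
    fix e assume eR: "e \<in> R"
    have "tree_load R S a' e = tree_load R S a e + (if (s', fst e) \<in> R\<^sup>* then \<delta> else 0)"
      unfolding a'_def using tl_update[OF fin(1) sS] by simp
    then show "tree_load R S a' e \<le> f e" using dle2[of e] eR ro unfolding K_def routing_ok_def by auto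
  qed
  then have "sum a' S \<le> sum a S" using mr by (simp add: max_routing_def)
  moreover have "sum a' S = sum a S + \<delta>"
    unfolding a'_def using fin(1) sS by (simp add: sum.remove)
  ultimately show False using dpos by simp
qed



lemma cons_diff:
  assumes "finite E" "cons_at V E t da f" "cons_at V E t db g"
  shows "cons_at V E t (\<lambda>v. da v - db v) (\<lambda>e. f e - g e)"
  unfolding cons_at_def
proof (intro ballI impI)
  fix v assume v: "v \<in> V" "v \<noteq> t"
  have 1: "(\<Sum>w\<in>{w. (v, w) \<in> E}. f (v, w)) - (\<Sum>u\<in>{u. (u, v) \<in> E}. f (u, v)) = da v"
    using assms(2) v unfolding cons_at_def by blast
  have 2: "(\<Sum>w\<in>{w. (v, w) \<in> E}. g (v, w)) - (\<Sum>u\<in>{u. (u, v) \<in> E}. g (u, v)) = db v"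
    using assms(3) v unfolding cons_at_def by blast
  show "(\<Sum>w\<in>{w. (v, w) \<in> E}. f (v, w) - g (v, w)) - (\<Sum>u\<in>{u. (u, v) \<in> E}. f (u, v) - g (u, v)) = da v - db v"
    unfolding sum_subtractf using 1 2 by linarith
qed

lemma tree_cons_at:
  assumes mp: "mp_tree E t R" and finE: "finite E" and finS: "finite S" and Sr: "\<forall>s\<in>S. (s, t) \<in> R\<^sup>+"
  shows "cons_at V E t (\<lambda>v. if v \<in> S then a v else 0) (\<lambda>e. if e \<in> R then tree_load R S a e else 0)"
  unfolding cons_at_def
proof (intro ballI impI)
  fix v assume "v \<in> V" "v \<noteq> t"
  interpret mpt E t R by (rule mpt.intro[OF mp])
  show "(\<Sum>w\<in>{w. (v, w) \<in> E}. if (v, w) \<in> R then tree_load R S a (v, w) else 0) -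
        (\<Sum>u\<in>{u. (u, v) \<in> E}. if (u, v) \<in> R then tree_load R S a (u, v) else 0) =
        (if v \<in> S then a v else 0)"
    by (rule tree_cons[OF finE finS Sr \<open>v \<noteq> t\<close>])
qed

lemma srcs_sub: "srcs V t r \<subseteq> V" by (auto simp: srcs_def)

lemma run_dirs:
  assumes "flow2trees V E t f r runs"
  shows "finite V \<Longrightarrow> finite E \<Longrightarrow> \<forall>e. 0 \<le> f e \<Longrightarrow> \<forall>v. 0 \<le> r v \<Longrightarrow> cons_at V E t r f \<Longrightarrow>
     \<exists>ys. length runs \<le> Suc (length ys)
       \<and> (\<forall>y\<in>set ys. cons_at V E t (\<lambda>_. 0) y \<and> (\<forall>e. y e \<noteq> 0 \<longrightarrow> 0 < f e))
       \<and> (\<forall>c. (\<forall>e. (\<Sum>i<length ys. c i * (ys!i) e) = 0) \<longrightarrow> (\<forall>i<length ys. c i = 0))"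
  using assms
proof (induction rule: flow2trees.induct)
  case (stop r f)
  show ?case by (rule exI[of _ "[]"]) simp
next
  case (step r R f a rest)
  define S where "S = srcs V t r"
  define L where "L e = (if e \<in> R then tree_load R S a e else 0)" for e
  define f' where "f' e = (if e \<in> R then f e - tree_load R S a e else f e)" for e
  define r' where "r' v = r v - a v" for v
  have f'L: "f' e = f e - L e" for e by (simp add: f'_def L_def)
  have finS: "finite S" using step.prems(1) srcs_sub[of V t r] unfolding S_def by (rule finite_subset[rotated])
  have mp: "mp_tree E t R" and Rpos: "R \<subseteq> {e. 0 < f e}" and Sr: "\<forall>s\<in>S. (s, t) \<in> R\<^sup>+"
    and mr: "max_routing R S f r a" using step.hyps by (auto simp: S_def)
  have finR: "finite R" using mp by (simp add: mp_tree_def)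
  have ro: "routing_ok R S f r a" using mr by (simp add: max_routing_def)
  have a_nn: "0 \<le> a v" for v using ro by (cases "v \<in> S") (auto simp: routing_ok_def)
  have L_nn: "0 \<le> L e" for e unfolding L_def using tl_nonneg[of S a R e] a_nn by auto
  have f'_nn: "\<forall>e. 0 \<le> f' e" using ro step.prems(3) by (auto simp: f'_def routing_ok_def)
  have f'_le: "f' e \<le> f e" for e using L_nn[of e] by (simp add: f'L)
  have r'_nn: "\<forall>v. 0 \<le> r' v" using ro step.prems(4) by (auto simp: r'_def routing_ok_def)
  have av0: "v \<notin> S \<Longrightarrow> a v = 0" for v using ro by (simp add: routing_ok_def)
  have tc: "cons_at V E t (\<lambda>v. if v \<in> S then a v else 0) L"
    using tree_cons_at[OF mp step.prems(2) finS Sr] unfolding L_def[abs_def] .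
  have "cons_at V E t (\<lambda>v. r v - (if v \<in> S then a v else 0)) (\<lambda>e. f e - L e)"
    by (rule cons_diff[OF step.prems(2) step.prems(5) tc])
  moreover have "(\<lambda>v. r v - (if v \<in> S then a v else 0)) = r'" using av0 by (auto simp: r'_def)
  ultimately have cons': "cons_at V E t r' f'" by (simp add: f'L[abs_def])
  have IH: "\<exists>ys. length rest \<le> Suc (length ys)
       \<and> (\<forall>y\<in>set ys. cons_at V E t (\<lambda>_. 0) y \<and> (\<forall>e. y e \<noteq> 0 \<longrightarrow> 0 < f' e))
       \<and> (\<forall>c. (\<forall>e. (\<Sum>i<length ys. c i * (ys!i) e) = 0) \<longrightarrow> (\<forall>i<length ys. c i = 0))"
    using step.IH[OF step.prems(1,2)] f'_nn r'_nn cons' unfolding f'_def r'_def S_def by blast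
  show ?case
  proof (cases "rest = []")
    case True
    then show ?thesis by (intro exI[of _ "[]"]) simp
  next
    case False
    from IH obtain ys where ys: "length rest \<le> Suc (length ys)"
      "\<forall>y\<in>set ys. cons_at V E t (\<lambda>_. 0) y \<and> (\<forall>e. y e \<noteq> 0 \<longrightarrow> 0 < f' e)"
      "\<forall>c. (\<forall>e. (\<Sum>i<length ys. c i * (ys!i) e) = 0) \<longrightarrow> (\<forall>i<length ys. c i = 0)" by blast
    have "srcs V t r' \<noteq> {}"
    proof
      assume "srcs V t r' = {}"
      have "flow2trees V E t f' r' rest" using step.hyps(6) unfolding f'_def r'_def S_def .
      then show False using False \<open>srcs V t r' = {}\<close> by (cases rule: flow2trees.cases) auto
    qed
    then obtain s' where s': "s' \<in> V" "s' \<noteq> t" "0 < r' s'" by (auto simp: srcs_def)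
    have s'S: "s' \<in> S" using s' a_nn[of s'] by (auto simp: S_def srcs_def r'_def)
    have lt: "a s' < r s'" using s' by (simp add: r'_def)
    obtain e0 where e0: "e0 \<in> R" "(s', fst e0) \<in> R\<^sup>*" "tree_load R S a e0 = f e0"
      using blocked[OF finS finR s'S lt mr] by blast
    have f'e0: "f' e0 = 0" using e0 by (simp add: f'_def)
    define L' where "L' e = (if e \<in> R then tree_load R S r' e else 0)" for e
    define y0 where "y0 e = f' e - L' e" for e
    have tc': "cons_at V E t (\<lambda>v. if v \<in> S then r' v else 0) L'"
      using tree_cons_at[OF mp step.prems(2) finS Sr] unfolding L'_def[abs_def] .
    have "cons_at V E t (\<lambda>v. r' v - (if v \<in> S then r' v else 0)) y0"
      unfolding y0_def by (rule cons_diff[OF step.prems(2) cons' tc'])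
    moreover have "\<forall>v\<in>V. v \<noteq> t \<longrightarrow> r' v - (if v \<in> S then r' v else 0) = 0"
    proof (intro ballI impI)
      fix v assume "v \<in> V" "v \<noteq> t"
      show "r' v - (if v \<in> S then r' v else 0) = 0"
      proof (cases "v \<in> S")
        case False
        then have "r v \<le> 0" using \<open>v \<in> V\<close> \<open>v \<noteq> t\<close> by (auto simp: S_def srcs_def)
        moreover have "0 \<le> r v" using step.prems(4) by blast
        ultimately show ?thesis using False av0[of v] by (simp add: r'_def)
      qed simp
    qed
    ultimately have y0c: "cons_at V E t (\<lambda>_. 0) y0" by (simp add: cons_at_def)
    have y0s: "\<forall>e. y0 e \<noteq> 0 \<longrightarrow> 0 < f e"
    proof (intro allI impI)
      fix e assume "y0 e \<noteq> 0"
      then have "f' e \<noteq> 0 \<or> L' e \<noteq> 0" by (auto simp: y0_def)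
      then show "0 < f e"
      proof
        assume "f' e \<noteq> 0"
        moreover have "0 \<le> f' e" using f'_nn by blast
        ultimately show ?thesis using f'_le[of e] by linarith
      next
        assume "L' e \<noteq> 0" then have "e \<in> R" by (auto simp: L'_def split: if_splits)
        then show ?thesis using Rpos by auto
      qed
    qed
    have "r' s' \<le> tree_load R S r' e0"
    proof -
      have "tree_load R S r' e0 = (if (s', fst e0) \<in> R\<^sup>* then r' s' else 0) + (\<Sum>s\<in>S - {s'}. if (s, fst e0) \<in> R\<^sup>* then r' s else 0)"
        unfolding tree_load_def using finS s'S by (simp add: sum.remove)
      moreover have "0 \<le> (\<Sum>s\<in>S - {s'}. if (s, fst e0) \<in> R\<^sup>* then r' s else 0)"
        using r'_nn by (intro sum_nonneg) auto
      ultimately show ?thesis using e0(2) by simp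
    qed
    then have y0e0: "y0 e0 < 0" using s'(3) e0(1) f'e0 by (simp add: y0_def L'_def)
    have ys0: "\<forall>i<length ys. (ys!i) e0 = 0" using ys(2) f'e0 by (metis nth_mem order_less_irrefl)
    show ?thesis
    proof (intro exI[of _ "y0 # ys"] conjI)
      show "length ((R, a) # rest) \<le> Suc (length (y0 # ys))" using ys(1) by simp
      show "\<forall>y\<in>set (y0 # ys). cons_at V E t (\<lambda>_. 0) y \<and> (\<forall>e. y e \<noteq> 0 \<longrightarrow> 0 < f e)"
        using ys(2) y0c y0s f'_le by (simp del: split_paired_All) (meson less_le_trans)
      show "\<forall>c. (\<forall>e. (\<Sum>i<length (y0 # ys). c i * ((y0 # ys) ! i) e) = 0) \<longrightarrow> (\<forall>i<length (y0 # ys). c i = 0)"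
      proof (intro allI impI)
        fix c i assume h: "\<forall>e. (\<Sum>i<length (y0 # ys). c i * ((y0 # ys) ! i) e) = 0" and i: "i < length (y0 # ys)"
        have h': "c 0 * y0 e + (\<Sum>i<length ys. c (Suc i) * (ys ! i) e) = 0" for e
          using h[rule_format, of e] by (simp only: length_Cons sum.lessThan_Suc_shift nth_Cons_0 nth_Cons_Suc)
        have "(\<Sum>i<length ys. c (Suc i) * (ys ! i) e0) = 0" using ys0 by simp
        then have c0: "c 0 = 0" using h'[of e0] y0e0 by simp
        then have "\<forall>e. (\<Sum>i<length ys. c (Suc i) * (ys ! i) e) = 0" using h' by simp
        then have "\<forall>i<length ys. c (Suc i) = 0" using ys(3)[rule_format, of "\<lambda>i. c (Suc i)"] by blast
        then show "c i = 0" using c0 i by (cases i) auto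
      qed
    qed
  qed
qed



lemma count_generic:
  fixes ys :: "'t \<Rightarrow> ('e \<Rightarrow> real) list" and U :: "'t \<times> nat \<Rightarrow> 'r \<Rightarrow> real"
  assumes finT: "finite T" and finRw: "finite Rw"
    and len: "\<forall>t\<in>T. n t \<le> Suc (length (ys t))"
    and ind: "\<forall>t\<in>T. \<forall>c. (\<forall>e. (\<Sum>i<length (ys t). c i * (ys t ! i) e) = 0) \<longrightarrow> (\<forall>i<length (ys t). c i = 0)"
    and key: "\<forall>c. (\<forall>x\<in>Rw. (\<Sum>j\<in>Sigma T (\<lambda>t. {..<length (ys t)}). c j * U j x) = 0)
                 \<longrightarrow> (\<forall>t\<in>T. \<forall>e. (\<Sum>i<length (ys t). c (t, i) * (ys t ! i) e) = 0)"
  shows "(\<Sum>t\<in>T. n t) \<le> card Rw + card T"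
proof -
  define J where "J = Sigma T (\<lambda>t. {..<length (ys t)})"
  have finJ: "finite J" unfolding J_def using finT by auto
  have "card J \<le> card Rw"
  proof (rule indep_card_le[OF finRw finJ, of U], intro allI impI ballI)
    fix c j assume h: "\<forall>x\<in>Rw. (\<Sum>j\<in>J. c j * U j x) = 0" and j: "j \<in> J"
    then have z: "\<forall>t\<in>T. \<forall>e. (\<Sum>i<length (ys t). c (t, i) * (ys t ! i) e) = 0"
      using key unfolding J_def by blast
    obtain t i where ji: "j = (t, i)" "t \<in> T" "i < length (ys t)" using j unfolding J_def by auto
    have "\<forall>i<length (ys t). c (t, i) = 0"
      using ind[rule_format, OF ji(2), of "\<lambda>i. c (t, i)"] z ji(2) by blast
    then show "c j = 0" using ji by simp
  qed
  moreover have "card J = (\<Sum>t\<in>T. length (ys t))" unfolding J_def using finT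
    by (simp add: card_SigmaI)
  moreover have "(\<Sum>t\<in>T. n t) \<le> (\<Sum>t\<in>T. Suc (length (ys t)))" using len by (intro sum_mono) auto
  moreover have "(\<Sum>t\<in>T. Suc (length (ys t))) = (\<Sum>t\<in>T. length (ys t)) + card T"
    by (induct T rule: infinite_finite_induct) auto
  ultimately show ?thesis by linarith
qed

lemma vertex_zero:
  assumes v: "is_vertex P f" and p: "(\<lambda>t e. f t e + \<epsilon> * z t e) \<in> P" and m: "(\<lambda>t e. f t e - \<epsilon> * z t e) \<in> P"
    and eps: "\<epsilon> \<noteq> 0"
  shows "z t e = 0"
proof -
  have "f = (\<lambda>t e. (1/2) * (f t e + \<epsilon> * z t e) + (1 - 1/2) * (f t e - \<epsilon> * z t e))"
    by (simp add: algebra_simps)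
  then have "(\<lambda>t e. f t e + \<epsilon> * z t e) = (\<lambda>t e. f t e - \<epsilon> * z t e)"
    using v p m unfolding is_vertex_def
    by (elim conjE ballE[where x="\<lambda>t e. f t e + \<epsilon> * z t e"] ballE[where x="\<lambda>t e. f t e - \<epsilon> * z t e"] allE[where x="1/2"]) auto
  then have "f t e + \<epsilon> * z t e = f t e - \<epsilon> * z t e" by metis
  then show ?thesis using eps by simp
qed

lemma eps_exists:
  fixes f z :: "'x \<Rightarrow> real"
  assumes finK: "finite K" and supp: "\<forall>x. z x \<noteq> 0 \<longrightarrow> x \<in> K \<and> 0 < f x" and nn: "\<forall>x. 0 \<le> f x"
  shows "\<exists>\<epsilon>>0. \<forall>x. 0 \<le> f x + \<epsilon> * z x \<and> 0 \<le> f x - \<epsilon> * z x"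
proof -
  define K' where "K' = {x\<in>K. z x \<noteq> 0}"
  have fK': "finite K'" using finK by (simp add: K'_def)
  define \<epsilon> where "\<epsilon> = Min (insert 1 ((\<lambda>x. f x / \<bar>z x\<bar>) ` K'))"
  have pos: "0 < \<epsilon>" unfolding \<epsilon>_def using fK' supp by (auto simp: K'_def)
  have "0 \<le> f x + \<epsilon> * z x \<and> 0 \<le> f x - \<epsilon> * z x" for x
  proof (cases "z x = 0")
    case True then show ?thesis using nn by simp
  next
    case False
    then have xK: "x \<in> K'" using supp by (simp add: K'_def)
    have "\<epsilon> \<le> f x / \<bar>z x\<bar>" unfolding \<epsilon>_def using fK' xK by simp
    then have "\<epsilon> * \<bar>z x\<bar> \<le> f x" using False by (simp add: pos_le_divide_eq)
    moreover have "\<bar>\<epsilon> * z x\<bar> = \<epsilon> * \<bar>z x\<bar>" using pos by (simp add: abs_mult)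
    ultimately show ?thesis by (smt (verit))
  qed
  then show ?thesis using pos by blast
qed

lemma sum_lin:
  fixes w :: "'a \<Rightarrow> real"
  assumes "finite A" "finite J"
  shows "(\<Sum>a\<in>A. w a * (\<Sum>j\<in>J. c j * F j a)) = (\<Sum>j\<in>J. c j * (\<Sum>a\<in>A. w a * F j a))"
proof -
  have "(\<Sum>a\<in>A. w a * (\<Sum>j\<in>J. c j * F j a)) = (\<Sum>a\<in>A. \<Sum>j\<in>J. c j * (w a * F j a))"
    by (simp add: sum_distrib_left algebra_simps)
  also have "\<dots> = (\<Sum>j\<in>J. \<Sum>a\<in>A. c j * (w a * F j a))" by (rule sum.swap)
  also have "\<dots> = (\<Sum>j\<in>J. c j * (\<Sum>a\<in>A. w a * F j a))" by (simp add: sum_distrib_left)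
  finally show ?thesis .
qed

lemma cons_comb:
  assumes finE: "finite E" and finJ: "finite J"
    and h: "\<forall>j\<in>J. cons_at V E t (\<lambda>_. 0) (F j)"
  shows "cons_at V E t (\<lambda>_. 0) (\<lambda>e. \<Sum>j\<in>J. c j * F j e)"
  unfolding cons_at_def
proof (intro ballI impI)
  fix v assume v: "v \<in> V" "v \<noteq> t"
  have fW: "finite {w. (v, w) \<in> E}" by (rule fin_succ[OF finE])
  have fU: "finite {u. (u, v) \<in> E}" by (rule fin_pred[OF finE])
  have "(\<Sum>w\<in>{w. (v, w) \<in> E}. \<Sum>j\<in>J. c j * F j (v, w)) - (\<Sum>u\<in>{u. (u, v) \<in> E}. \<Sum>j\<in>J. c j * F j (u, v))
      = (\<Sum>j\<in>J. c j * ((\<Sum>w\<in>{w. (v, w) \<in> E}. F j (v, w)) - (\<Sum>u\<in>{u. (u, v) \<in> E}. F j (u, v))))"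
    using sum_lin[OF fW finJ, of "\<lambda>_. 1" c "\<lambda>j w. F j (v, w)"] sum_lin[OF fU finJ, of "\<lambda>_. 1" c "\<lambda>j u. F j (u, v)"]
    by (simp add: right_diff_distrib sum_subtractf)
  also have "\<dots> = 0" using h v unfolding cons_at_def by (intro sum.neutral) auto
  finally show "(\<Sum>w\<in>{w. (v, w) \<in> E}. \<Sum>j\<in>J. c j * F j (v, w)) - (\<Sum>u\<in>{u. (u, v) \<in> E}. \<Sum>j\<in>J. c j * F j (u, v)) = 0" .
qed

lemma run_a_nonneg:
  assumes "flow2trees V E t f r runs"
  shows "\<forall>Ra\<in>set runs. \<forall>x. 0 \<le> snd Ra x"
  using assms
proof (induction rule: flow2trees.induct)
  case (step r R f a rest)
  have "0 \<le> a x" for x using step.hyps(5) unfolding max_routing_def routing_ok_def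
    by (cases "x \<in> srcs V t r") auto
  then show ?case using step.IH by auto
qed simp



lemma cons_add_scale:
  assumes "cons_at V E t d f" "cons_at V E t (\<lambda>_. 0) g"
  shows "cons_at V E t d (\<lambda>e. f e + \<delta> * g e)"
  unfolding cons_at_def
proof (intro ballI impI)
  fix v assume v: "v \<in> V" "v \<noteq> t"
  have 1: "(\<Sum>w\<in>{w. (v, w) \<in> E}. f (v, w)) - (\<Sum>u\<in>{u. (u, v) \<in> E}. f (u, v)) = d v"
    using assms(1) v unfolding cons_at_def by blast
  have 2: "(\<Sum>w\<in>{w. (v, w) \<in> E}. g (v, w)) - (\<Sum>u\<in>{u. (u, v) \<in> E}. g (u, v)) = 0"
    using assms(2) v unfolding cons_at_def by blast
  have "(\<Sum>w\<in>{w. (v, w) \<in> E}. f (v, w) + \<delta> * g (v, w)) - (\<Sum>u\<in>{u. (u, v) \<in> E}. f (u, v) + \<delta> * g (u, v))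
     = ((\<Sum>w\<in>{w. (v, w) \<in> E}. f (v, w)) - (\<Sum>u\<in>{u. (u, v) \<in> E}. f (u, v)))
       + \<delta> * ((\<Sum>w\<in>{w. (v, w) \<in> E}. g (v, w)) - (\<Sum>u\<in>{u. (u, v) \<in> E}. g (u, v)))"
    by (simp add: sum.distrib sum_distrib_left[symmetric] algebra_simps)
  then show "(\<Sum>w\<in>{w. (v, w) \<in> E}. f (v, w) + \<delta> * g (v, w)) - (\<Sum>u\<in>{u. (u, v) \<in> E}. f (u, v) + \<delta> * g (u, v)) = d v"
    using 1 2 by simp
qed

lemma z_expand:
  fixes L :: "'t \<Rightarrow> nat" and c :: "'t \<times> nat \<Rightarrow> real"
  assumes finT: "finite T" and inj: "inj_on N T" and k: "k \<in> T"
  shows "(\<Sum>j\<in>Sigma T (\<lambda>t. {..<L t}). c j * (if N k = N (fst j) then G (fst j) (snd j) else 0))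
       = (\<Sum>i<L k. c (k, i) * G k i)"
proof -
  have "(\<Sum>j\<in>Sigma T (\<lambda>t. {..<L t}). c j * (if N k = N (fst j) then G (fst j) (snd j) else 0))
      = (\<Sum>k'\<in>T. \<Sum>i<L k'. c (k', i) * (if N k = N k' then G k' i else 0))"
    by (subst sum.Sigma[OF finT]) (auto simp: split_def)
  also have "\<dots> = (\<Sum>k'\<in>T. if k' = k then (\<Sum>i<L k. c (k, i) * G k i) else 0)"
  proof (rule sum.cong[OF refl])
    fix k' assume "k' \<in> T"
    then have "N k = N k' \<longleftrightarrow> k' = k" using inj k by (auto dest: inj_onD)
    then show "(\<Sum>i<L k'. c (k', i) * (if N k = N k' then G k' i else 0)) = (if k' = k then (\<Sum>i<L k. c (k, i) * G k i) else 0)"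
      by auto
  qed
  also have "\<dots> = (\<Sum>i<L k. c (k, i) * G k i)" using finT k by (simp add: sum.delta')
  finally show ?thesis .
qed

lemma sum_nz: "(\<Sum>j\<in>J. F j) \<noteq> (0::real) \<Longrightarrow> \<exists>j\<in>J. F j \<noteq> 0"
  by (meson sum.neutral)



lemma fin_E0: "network Vsw Vpm E0 g b \<Longrightarrow> finite E0"
  unfolding network_def by (meson finite_SigmaI finite_UnI finite_subset)

lemma fin_E2: "network Vsw Vpm E0 g b \<Longrightarrow> finite (E2 Vsw E0)"
  unfolding E2_def by (drule fin_E0) simp

lemma fin_swpm: "network Vsw Vpm E0 g b \<Longrightarrow> finite (swpm Vsw Vpm E0)"
  unfolding network_def swpm_def by auto

lemma fin_E1: "network Vsw Vpm E0 g b \<Longrightarrow> finite (E1 Vsw Vpm E0 C)"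
proof -
  assume n: "network Vsw Vpm E0 g b"
  have "{(Sw v, Pn k) | v k. v \<in> swpm Vsw Vpm E0 \<and> k \<in> {1..C}}
        \<subseteq> (\<lambda>(v, k). (Sw v, Pn k)) ` (swpm Vsw Vpm E0 \<times> {1..C})" by auto
  moreover have "finite ((\<lambda>(v, k). (Sw v, Pn k)) ` (swpm Vsw Vpm E0 \<times> {1..C}))"
    using fin_swpm[OF n] by auto
  ultimately show ?thesis unfolding E1_def using fin_E2[OF n] by (auto intro: finite_subset)
qed

lemma fin_V1: "network Vsw Vpm E0 g b \<Longrightarrow> finite (V1 Vsw C)"
  unfolding network_def V1_def by auto

lemma d1_nonneg: "commodities Vsw M src dst dem cl C p \<Longrightarrow> 0 \<le> d1 M src dem cl t v"
  unfolding commodities_def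
  by (cases "(M, src, dem, cl, t, v)" rule: d1.cases) (auto intro!: sum_nonneg simp: less_imp_le)



lemma conservation_iff: "conservation V E T d f \<longleftrightarrow> (\<forall>t\<in>T. cons_at V E t (d t) (f t))"
  by (simp add: conservation_def cons_at_def)

lemma cons_zero: "cons_at V E t (\<lambda>_. 0) (\<lambda>e. 0)"
  by (simp add: cons_at_def)

lemma step1_bound:
  fixes Vsw Vpm :: "'v set" and E0 :: "('v \<times> 'v) set"
    and f1 :: "'v node1 \<Rightarrow> 'v node1 \<times> 'v node1 \<Rightarrow> real"
    and runs1 :: "nat \<Rightarrow> (('v node1 \<times> 'v node1) set \<times> ('v node1 \<Rightarrow> real)) list"
  assumes net: "network Vsw Vpm E0 g b"
    and com: "commodities Vsw M src dst dem cl C p"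
    and bfs1: "is_vertex (lp1_set Vsw Vpm E0 g b M src dem cl C p) f1"
    and trees1: "\<forall>k\<in>{1..C}. flow2trees (V1 Vsw C) (E1 Vsw Vpm E0 C) (Pn k)
                              (f1 (Pn k)) (d1 M src dem cl (Pn k)) (runs1 k)"
  shows "(\<Sum>k\<in>{1..C}. length (runs1 k)) \<le> card (E2 Vsw E0) + 2 * card (swpm Vsw Vpm E0) + C"
proof -
  define V where "V = V1 Vsw C"
  define E where "E = E1 Vsw Vpm E0 C"
  define P where "P = lp1_set Vsw Vpm E0 g b M src dem cl C p"
  define T where "T = {1..C}"
  define SW where "SW = swpm Vsw Vpm E0"
  define EE where "EE = E2 Vsw E0"
  define d where "d = d1 M src dem cl"
  have finV: "finite V" using fin_V1[OF net] by (simp add: V_def)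
  have finE: "finite E" using fin_E1[OF net] by (simp add: E_def)
  have finT: "finite T" by (simp add: T_def)
  have finSW: "finite SW" using fin_swpm[OF net] by (simp add: SW_def)
  have finEE: "finite EE" using fin_E2[OF net] by (simp add: EE_def)
  have f1P: "f1 \<in> P" using bfs1 by (simp add: is_vertex_def P_def)
  then have f1z: "\<And>t e. t \<notin> Pn ` T \<or> e \<notin> E \<Longrightarrow> f1 t e = 0"
    and f1c: "conservation V E (Pn ` T) d f1"
    and f1nn: "\<And>t e. 0 \<le> f1 t e"
    unfolding P_def lp1_set_def V_def E_def T_def d_def by blast+
  have f1pos: "0 < f1 t e \<Longrightarrow> t \<in> Pn ` T \<and> e \<in> E" for t e using f1z[of t e] by auto
  have "\<forall>k\<in>T. \<exists>ys. length (runs1 k) \<le> Suc (length ys)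
       \<and> (\<forall>y\<in>set ys. cons_at V E (Pn k) (\<lambda>_. 0) y \<and> (\<forall>e. y e \<noteq> 0 \<longrightarrow> 0 < f1 (Pn k) e))
       \<and> (\<forall>c. (\<forall>e. (\<Sum>i<length ys. c i * (ys!i) e) = 0) \<longrightarrow> (\<forall>i<length ys. c i = 0))"
  proof
    fix k assume k: "k \<in> T"
    have run: "flow2trees V E (Pn k) (f1 (Pn k)) (d (Pn k)) (runs1 k)"
      using trees1 k by (simp add: V_def E_def T_def d_def)
    have "cons_at V E (Pn k) (d (Pn k)) (f1 (Pn k))" using f1c k by (simp add: conservation_iff)
    moreover have "\<forall>v. 0 \<le> d (Pn k) v" using d1_nonneg[OF com] by (simp add: d_def)
    ultimately show "\<exists>ys. length (runs1 k) \<le> Suc (length ys)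
       \<and> (\<forall>y\<in>set ys. cons_at V E (Pn k) (\<lambda>_. 0) y \<and> (\<forall>e. y e \<noteq> 0 \<longrightarrow> 0 < f1 (Pn k) e))
       \<and> (\<forall>c. (\<forall>e. (\<Sum>i<length ys. c i * (ys!i) e) = 0) \<longrightarrow> (\<forall>i<length ys. c i = 0))"
      using run_dirs[OF run finV finE] f1nn by blast
  qed
  from bchoice[OF this] obtain ys where ys: "\<forall>k\<in>T. length (runs1 k) \<le> Suc (length (ys k))
       \<and> (\<forall>y\<in>set (ys k). cons_at V E (Pn k) (\<lambda>_. 0) y \<and> (\<forall>e. y e \<noteq> 0 \<longrightarrow> 0 < f1 (Pn k) e))
       \<and> (\<forall>c. (\<forall>e. (\<Sum>i<length (ys k). c i * (ys k ! i) e) = 0) \<longrightarrow> (\<forall>i<length (ys k). c i = 0))"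
    by blast
  define Rw :: "(('v \<times> 'v) + ('v + 'v)) set" where "Rw = Inl ` EE \<union> Inr ` (Inl ` SW \<union> Inr ` SW)"
  define rowv :: "('v node1 \<Rightarrow> 'v node1 \<times> 'v node1 \<Rightarrow> real) \<Rightarrow> (('v \<times> 'v) + ('v + 'v)) \<Rightarrow> real"
    where "rowv z x = (case x of Inl e \<Rightarrow> (\<Sum>t\<in>Pn ` T. z t (Sw (fst e), Sw (snd e)))
        | Inr (Inl v) \<Rightarrow> (\<Sum>k\<in>T. z (Pn k) (Sw v, Pn k))
        | Inr (Inr v) \<Rightarrow> (\<Sum>k\<in>T. p k * z (Pn k) (Sw v, Pn k)))" for z x
  define Y :: "nat \<times> nat \<Rightarrow> 'v node1 \<Rightarrow> 'v node1 \<times> 'v node1 \<Rightarrow> real" where "Y j = (\<lambda>t e. if t = Pn (fst j) then (ys (fst j) ! snd j) e else 0)" for j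
  define J where "J = Sigma T (\<lambda>k. {..<length (ys k)})"
  have finJ: "finite J" using finT by (simp add: J_def)
  have finRw: "finite Rw" using finEE finSW by (simp add: Rw_def)
  have "(\<Sum>k\<in>T. length (runs1 k)) \<le> card Rw + card T"
  proof (rule count_generic[OF finT finRw, where U = "\<lambda>j x. rowv (Y j) x" and ys = ys])
    show "\<forall>k\<in>T. length (runs1 k) \<le> Suc (length (ys k))" using ys by blast
    show "\<forall>k\<in>T. \<forall>c. (\<forall>e. (\<Sum>i<length (ys k). c i * (ys k ! i) e) = 0) \<longrightarrow> (\<forall>i<length (ys k). c i = 0)"
      using ys by blast
    show "\<forall>c. (\<forall>x\<in>Rw. (\<Sum>j\<in>Sigma T (\<lambda>t. {..<length (ys t)}). c j * rowv (Y j) x) = 0) \<longrightarrow>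
        (\<forall>k\<in>T. \<forall>e. (\<Sum>i<length (ys k). c (k, i) * (ys k ! i) e) = 0)"
    proof (intro allI impI ballI)
      fix c k e
      assume rows0: "\<forall>x\<in>Rw. (\<Sum>j\<in>Sigma T (\<lambda>t. {..<length (ys t)}). c j * rowv (Y j) x) = 0"
        and k: "k \<in> T"
      define z where "z t e = (\<Sum>j\<in>J. c j * Y j t e)" for t e
      have rowlin: "rowv z x = (\<Sum>j\<in>J. c j * rowv (Y j) x)" for x
      proof (cases x)
        case (Inl e)
        then show ?thesis unfolding rowv_def z_def
          using sum_lin[OF finite_imageI[OF finT] finJ, of "\<lambda>_. 1" c "\<lambda>j t. Y j t (Sw (fst e), Sw (snd e))"] by simp
      next
        case (Inr y)
        then show ?thesis
        proof (cases y)
          case (Inl v)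
          then show ?thesis using Inr unfolding rowv_def z_def
            using sum_lin[OF finT finJ, of "\<lambda>_. 1" c "\<lambda>j k. Y j (Pn k) (Sw v, Pn k)"] by simp
        next
          case (Inr v)
          then show ?thesis using \<open>x = Inr y\<close> unfolding rowv_def z_def
            using sum_lin[OF finT finJ, of p c "\<lambda>j k. Y j (Pn k) (Sw v, Pn k)"] by simp
        qed
      qed
      have rz: "x \<in> Rw \<Longrightarrow> rowv z x = 0" for x using rows0 rowlin by (simp add: J_def)
      have zsupp: "z t e \<noteq> 0 \<Longrightarrow> 0 < f1 t e" for t e
      proof -
        assume "z t e \<noteq> 0"
        then obtain j where j: "j \<in> J" "c j * Y j t e \<noteq> 0" unfolding z_def by (blast dest: sum_nz)
        then have t: "t = Pn (fst j)" and ne: "(ys (fst j) ! snd j) e \<noteq> 0" by (auto simp: Y_def split: if_splits)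
        have "fst j \<in> T" "snd j < length (ys (fst j))" using j(1) by (auto simp: J_def)
        then have yin: "ys (fst j) ! snd j \<in> set (ys (fst j))" by simp
        have "\<forall>y\<in>set (ys (fst j)). cons_at V E (Pn (fst j)) (\<lambda>_. 0) y \<and> (\<forall>e. y e \<noteq> 0 \<longrightarrow> 0 < f1 (Pn (fst j)) e)"
          using ys \<open>fst j \<in> T\<close> by blast
        then show "0 < f1 t e" using yin ne t by blast
      qed
      have zcons: "cons_at V E t (\<lambda>_. 0) (z t)" if "t \<in> Pn ` T" for t
      proof -
        have "\<forall>j\<in>J. cons_at V E t (\<lambda>_. 0) (Y j t)"
        proof
          fix j assume j: "j \<in> J"
          show "cons_at V E t (\<lambda>_. 0) (Y j t)"
          proof (cases "t = Pn (fst j)")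
            case True
            have "fst j \<in> T" "snd j < length (ys (fst j))" using j by (auto simp: J_def)
            then have yin: "ys (fst j) ! snd j \<in> set (ys (fst j))" by simp
            have "\<forall>y\<in>set (ys (fst j)). cons_at V E (Pn (fst j)) (\<lambda>_. 0) y \<and> (\<forall>e. y e \<noteq> 0 \<longrightarrow> 0 < f1 (Pn (fst j)) e)"
              using ys \<open>fst j \<in> T\<close> by blast
            then have "cons_at V E (Pn (fst j)) (\<lambda>_. 0) (ys (fst j) ! snd j)" using yin by blast
            then show ?thesis using True by (simp add: Y_def)
          next
            case False
            then show ?thesis by (simp add: Y_def cons_zero)
          qed
        qed
        from cons_comb[OF finE finJ this, of c] show ?thesis by (simp add: z_def[abs_def])
      qed
      have finK: "finite (Pn ` T \<times> E)" using finT finE by simp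
      obtain \<epsilon> where eps: "0 < \<epsilon>" "\<forall>x. 0 \<le> f1 (fst x) (snd x) + \<epsilon> * z (fst x) (snd x)
          \<and> 0 \<le> f1 (fst x) (snd x) - \<epsilon> * z (fst x) (snd x)"
      proof -
        have "\<forall>x. z (fst x) (snd x) \<noteq> 0 \<longrightarrow> x \<in> Pn ` T \<times> E \<and> 0 < f1 (fst x) (snd x)"
        proof (intro allI impI)
          fix x assume "z (fst x) (snd x) \<noteq> 0"
          then have "0 < f1 (fst x) (snd x)" by (rule zsupp)
          then show "x \<in> Pn ` T \<times> E \<and> 0 < f1 (fst x) (snd x)" using f1pos by (cases x) auto
        qed
        moreover have "\<forall>x. 0 \<le> f1 (fst x) (snd x)" using f1nn by blast
        ultimately show ?thesis using that eps_exists[OF finK, of "\<lambda>x. z (fst x) (snd x)" "\<lambda>x. f1 (fst x) (snd x)"]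
          by blast
      qed
      have mem: "(\<lambda>t e. f1 t e + \<delta> * z t e) \<in> P" if nn: "\<forall>t e. 0 \<le> f1 t e + \<delta> * z t e" for \<delta>
        unfolding P_def lp1_set_def
      proof (intro CollectI conjI allI impI ballI)
        fix t :: "'v node1" and e assume "t \<notin> Pn ` {1..C} \<or> e \<notin> E1 Vsw Vpm E0 C"
        then have "f1 t e = 0" using f1z by (simp add: T_def E_def)
        moreover then have "z t e = 0" using zsupp[of t e] by fastforce
        ultimately show "f1 t e + \<delta> * z t e = 0" by simp
      next
        show "conservation (V1 Vsw C) (E1 Vsw Vpm E0 C) (Pn ` {1..C}) (d1 M src dem cl) (\<lambda>t e. f1 t e + \<delta> * z t e)"
          unfolding conservation_iff
        proof
          fix t :: "'v node1" assume t: "t \<in> Pn ` {1..C}"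
          have "cons_at V E t (d t) (f1 t)" using f1c t unfolding conservation_iff T_def by blast
          from cons_add_scale[OF this zcons[of t], of \<delta>] t
          show "cons_at (V1 Vsw C) (E1 Vsw Vpm E0 C) t (d1 M src dem cl t) (\<lambda>e. f1 t e + \<delta> * z t e)"
            by (simp add: V_def E_def d_def T_def)
        qed
      next
        fix e assume e: "e \<in> E2 Vsw E0"
        have "(\<Sum>t\<in>Pn ` {1..C}. f1 t (Sw (fst e), Sw (snd e)) + \<delta> * z t (Sw (fst e), Sw (snd e)))
            = (\<Sum>t\<in>Pn ` {1..C}. f1 t (Sw (fst e), Sw (snd e))) + \<delta> * rowv z (Inl e)"
          by (simp add: rowv_def T_def sum.distrib sum_distrib_left)
        moreover have "rowv z (Inl e) = 0" using rz e by (simp add: Rw_def EE_def)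
        moreover have "(\<Sum>t\<in>Pn ` {1..C}. f1 t (Sw (fst e), Sw (snd e))) \<le> g e"
          using f1P e unfolding P_def lp1_set_def by blast
        ultimately show "(\<Sum>t\<in>Pn ` {1..C}. f1 t (Sw (fst e), Sw (snd e)) + \<delta> * z t (Sw (fst e), Sw (snd e))) \<le> g e"
          by simp
      next
        fix v assume v: "v \<in> swpm Vsw Vpm E0"
        have "(\<Sum>k\<in>{1..C}. f1 (Pn k) (Sw v, Pn k) + \<delta> * z (Pn k) (Sw v, Pn k))
            = (\<Sum>k\<in>{1..C}. f1 (Pn k) (Sw v, Pn k)) + \<delta> * rowv z (Inr (Inl v))"
          by (simp add: rowv_def T_def sum.distrib sum_distrib_left)
        moreover have "rowv z (Inr (Inl v)) = 0" using rz v by (simp add: Rw_def SW_def)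
        moreover have "(\<Sum>k\<in>{1..C}. f1 (Pn k) (Sw v, Pn k)) \<le> min (g (v, hat Vpm E0 v)) (g (hat Vpm E0 v, v))"
          using f1P v unfolding P_def lp1_set_def by blast
        ultimately show "(\<Sum>k\<in>{1..C}. f1 (Pn k) (Sw v, Pn k) + \<delta> * z (Pn k) (Sw v, Pn k))
            \<le> min (g (v, hat Vpm E0 v)) (g (hat Vpm E0 v, v))" by simp
      next
        fix v assume v: "v \<in> swpm Vsw Vpm E0"
        have "(\<Sum>k\<in>{1..C}. p k * (f1 (Pn k) (Sw v, Pn k) + \<delta> * z (Pn k) (Sw v, Pn k)))
            = (\<Sum>k\<in>{1..C}. p k * f1 (Pn k) (Sw v, Pn k)) + \<delta> * rowv z (Inr (Inr v))"
          by (simp add: rowv_def T_def sum.distrib sum_distrib_left algebra_simps)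
        moreover have "rowv z (Inr (Inr v)) = 0" using rz v by (simp add: Rw_def SW_def)
        moreover have "(\<Sum>k\<in>{1..C}. p k * f1 (Pn k) (Sw v, Pn k)) \<le> b (hat Vpm E0 v)"
          using f1P v unfolding P_def lp1_set_def by blast
        ultimately show "(\<Sum>k\<in>{1..C}. p k * (f1 (Pn k) (Sw v, Pn k) + \<delta> * z (Pn k) (Sw v, Pn k)))
            \<le> b (hat Vpm E0 v)" by simp
      next
        fix t :: "'v node1" and e show "0 \<le> f1 t e + \<delta> * z t e" using nn by blast
      qed
      have p1: "(\<lambda>t e. f1 t e + \<epsilon> * z t e) \<in> P" using mem eps(2) by simp
      have p2: "(\<lambda>t e. f1 t e - \<epsilon> * z t e) \<in> P" using mem[of "- \<epsilon>"] eps(2) by simp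
      have z0: "z (Pn k) e = 0" using vertex_zero[OF bfs1[folded P_def] p1 p2] eps(1) by simp
      have "z (Pn k) e = (\<Sum>i<length (ys k). c (k, i) * (ys k ! i) e)"
        unfolding z_def J_def Y_def
        using z_expand[OF finT _ k, where N=Pn and L="\<lambda>k. length (ys k)" and c=c and G="\<lambda>k i. (ys k ! i) e"]
        by (simp add: inj_on_def)
      then show "(\<Sum>i<length (ys k). c (k, i) * (ys k ! i) e) = 0" using z0 by simp
    qed
  qed
  moreover have "card Rw = card EE + 2 * card SW"
  proof -
    have "card Rw = card (Inl ` EE :: (('v \<times> 'v) + ('v + 'v)) set) + card (Inr ` (Inl ` SW \<union> Inr ` SW) :: (('v \<times> 'v) + ('v + 'v)) set)"
      unfolding Rw_def by (rule card_Un_disjoint) (use finEE finSW in auto)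
    also have "card (Inr ` (Inl ` SW \<union> Inr ` SW) :: (('v \<times> 'v) + ('v + 'v)) set) = card (Inl ` SW \<union> Inr ` SW :: ('v + 'v) set)"
      by (simp add: card_image)
    also have "card (Inl ` SW \<union> Inr ` SW :: ('v + 'v) set) = card (Inl ` SW :: ('v + 'v) set) + card (Inr ` SW :: ('v + 'v) set)"
      by (rule card_Un_disjoint) (use finSW in auto)
    finally show ?thesis by (simp add: card_image)
  qed
  ultimately show ?thesis by (simp add: T_def EE_def SW_def)
qed



lemma d2_nonneg:
  assumes com: "commodities Vsw M src dst dem cl C p"
    and trees1: "\<forall>k\<in>{1..C}. flow2trees (V1 Vsw C) (E1 Vsw Vpm E0 C) (Pn k)
                              (f1 (Pn k)) (d1 M src dem cl (Pn k)) (runs1 k)"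
  shows "0 \<le> d2 Vsw M src dst dem cl C runs1 t v"
  unfolding d2_def
proof (rule sum_nonneg)
  fix k assume k: "k \<in> {1..C}"
  have an: "\<forall>Ra\<in>set (runs1 k). \<forall>x. 0 \<le> snd Ra x" by (rule run_a_nonneg[OF trees1[rule_format, OF k]])
  have dm: "\<forall>i\<in>{1..M}. 0 \<le> dem i" using com unfolding commodities_def by (auto simp: less_imp_le)
  have c1: "0 \<le> Dcst M src dst dem cl k s t" for s unfolding Dcst_def using dm by (intro sum_nonneg) auto
  have c2: "0 \<le> Dcs M src dem cl k s" for s unfolding Dcs_def using dm by (intro sum_nonneg) auto
  show "0 \<le> sum_list (map (\<lambda>(R, a). \<Sum>s\<in>Vsw. if (Sw s, Sw v) \<in> R\<^sup>* \<and> (Sw v, Pn k) \<in> R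
          then a (Sw s) * Dcst M src dst dem cl k s t / Dcs M src dem cl k s else 0) (runs1 k))"
  proof (rule sum_list_nonneg)
    fix x assume "x \<in> set (map (\<lambda>(R, a). \<Sum>s\<in>Vsw. if (Sw s, Sw v) \<in> R\<^sup>* \<and> (Sw v, Pn k) \<in> R
          then a (Sw s) * Dcst M src dst dem cl k s t / Dcs M src dem cl k s else 0) (runs1 k))"
    then obtain R a where Ra: "(R, a) \<in> set (runs1 k)" and x: "x = (\<Sum>s\<in>Vsw. if (Sw s, Sw v) \<in> R\<^sup>* \<and> (Sw v, Pn k) \<in> R
          then a (Sw s) * Dcst M src dst dem cl k s t / Dcs M src dem cl k s else 0)" by auto
    have "\<forall>y. 0 \<le> a y" using an Ra by fastforce
    then show "0 \<le> x" unfolding x using c1 c2 by (intro sum_nonneg) (auto intro!: divide_nonneg_nonneg mult_nonneg_nonneg)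
  qed
qed

lemma step2_bound:
  fixes Vsw Vpm :: "'v set" and E0 :: "('v \<times> 'v) set"
    and f1 :: "'v node1 \<Rightarrow> 'v node1 \<times> 'v node1 \<Rightarrow> real"
    and runs1 :: "nat \<Rightarrow> (('v node1 \<times> 'v node1) set \<times> ('v node1 \<Rightarrow> real)) list"
    and f2 :: "'v \<Rightarrow> 'v \<times> 'v \<Rightarrow> real"
    and runs2 :: "'v \<Rightarrow> (('v \<times> 'v) set \<times> ('v \<Rightarrow> real)) list"
  assumes net: "network Vsw Vpm E0 g b"
    and com: "commodities Vsw M src dst dem cl C p"
    and trees1: "\<forall>k\<in>{1..C}. flow2trees (V1 Vsw C) (E1 Vsw Vpm E0 C) (Pn k)
                              (f1 (Pn k)) (d1 M src dem cl (Pn k)) (runs1 k)"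
    and bfs2: "is_vertex (lp2_set Vsw (E2 Vsw E0) (dst ` {1..M})
                             (d2 Vsw M src dst dem cl C runs1) (gbar Vsw C g f1)) f2"
    and trees2: "\<forall>t\<in>dst ` {1..M}. flow2trees Vsw (E2 Vsw E0) t (f2 t)
                              (d2 Vsw M src dst dem cl C runs1 t) (runs2 t)"
  shows "(\<Sum>t\<in>dst ` {1..M}. length (runs2 t)) \<le> card (E2 Vsw E0) + card (dst ` {1..M})"
proof -
  define V where "V = Vsw"
  define E where "E = E2 Vsw E0"
  define T where "T = dst ` {1..M}"
  define d where "d = d2 Vsw M src dst dem cl C runs1"
  define P where "P = lp2_set Vsw (E2 Vsw E0) (dst ` {1..M}) (d2 Vsw M src dst dem cl C runs1) (gbar Vsw C g f1)"
  have finV: "finite V" using net by (simp add: V_def network_def)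
  have finE: "finite E" using fin_E2[OF net] by (simp add: E_def)
  have finT: "finite T" by (simp add: T_def)
  have f2P: "f2 \<in> P" using bfs2 by (simp add: is_vertex_def P_def)
  then have f2z: "\<And>t e. t \<notin> T \<or> e \<notin> E \<Longrightarrow> f2 t e = 0"
    and f2c: "conservation V E T d f2"
    and f2nn: "\<And>t e. 0 \<le> f2 t e"
    unfolding P_def lp2_set_def V_def E_def T_def d_def by blast+
  have f2pos: "0 < f2 t e \<Longrightarrow> t \<in> T \<and> e \<in> E" for t e using f2z[of t e] by auto
  have "\<forall>k\<in>T. \<exists>ys. length (runs2 k) \<le> Suc (length ys)
       \<and> (\<forall>y\<in>set ys. cons_at V E k (\<lambda>_. 0) y \<and> (\<forall>e. y e \<noteq> 0 \<longrightarrow> 0 < f2 k e))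
       \<and> (\<forall>c. (\<forall>e. (\<Sum>i<length ys. c i * (ys!i) e) = 0) \<longrightarrow> (\<forall>i<length ys. c i = 0))"
  proof
    fix k assume k: "k \<in> T"
    have run: "flow2trees V E k (f2 k) (d k) (runs2 k)"
      using trees2 k unfolding V_def E_def T_def d_def by blast
    have "cons_at V E k (d k) (f2 k)" using f2c k unfolding conservation_iff by blast
    moreover have "\<forall>v. 0 \<le> d k v" using d2_nonneg[OF com trees1] by (simp add: d_def)
    ultimately show "\<exists>ys. length (runs2 k) \<le> Suc (length ys)
       \<and> (\<forall>y\<in>set ys. cons_at V E k (\<lambda>_. 0) y \<and> (\<forall>e. y e \<noteq> 0 \<longrightarrow> 0 < f2 k e))
       \<and> (\<forall>c. (\<forall>e. (\<Sum>i<length ys. c i * (ys!i) e) = 0) \<longrightarrow> (\<forall>i<length ys. c i = 0))"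
      using run_dirs[OF run finV finE] f2nn by blast
  qed
  from bchoice[OF this] obtain ys where ys: "\<forall>k\<in>T. length (runs2 k) \<le> Suc (length (ys k))
       \<and> (\<forall>y\<in>set (ys k). cons_at V E k (\<lambda>_. 0) y \<and> (\<forall>e. y e \<noteq> 0 \<longrightarrow> 0 < f2 k e))
       \<and> (\<forall>c. (\<forall>e. (\<Sum>i<length (ys k). c i * (ys k ! i) e) = 0) \<longrightarrow> (\<forall>i<length (ys k). c i = 0))"
    by blast
  define Rw where "Rw = E"
  define rowv :: "('v \<Rightarrow> 'v \<times> 'v \<Rightarrow> real) \<Rightarrow> 'v \<times> 'v \<Rightarrow> real"
    where "rowv z x = (\<Sum>t\<in>T. z t x)" for z x
  define Y :: "'v \<times> nat \<Rightarrow> 'v \<Rightarrow> 'v \<times> 'v \<Rightarrow> real" where "Y j = (\<lambda>t e. if t = fst j then (ys (fst j) ! snd j) e else 0)" for j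
  define J where "J = Sigma T (\<lambda>k. {..<length (ys k)})"
  have finJ: "finite J" using finT by (simp add: J_def)
  have finRw: "finite Rw" using finE by (simp add: Rw_def)
  have "(\<Sum>k\<in>T. length (runs2 k)) \<le> card Rw + card T"
  proof (rule count_generic[OF finT finRw, where U = "\<lambda>j x. rowv (Y j) x" and ys = ys])
    show "\<forall>k\<in>T. length (runs2 k) \<le> Suc (length (ys k))" using ys by blast
    show "\<forall>k\<in>T. \<forall>c. (\<forall>e. (\<Sum>i<length (ys k). c i * (ys k ! i) e) = 0) \<longrightarrow> (\<forall>i<length (ys k). c i = 0)"
      using ys by blast
    show "\<forall>c. (\<forall>x\<in>Rw. (\<Sum>j\<in>Sigma T (\<lambda>t. {..<length (ys t)}). c j * rowv (Y j) x) = 0) \<longrightarrow>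
        (\<forall>k\<in>T. \<forall>e. (\<Sum>i<length (ys k). c (k, i) * (ys k ! i) e) = 0)"
    proof (intro allI impI ballI)
      fix c k e
      assume rows0: "\<forall>x\<in>Rw. (\<Sum>j\<in>Sigma T (\<lambda>t. {..<length (ys t)}). c j * rowv (Y j) x) = 0"
        and k: "k \<in> T"
      define z where "z t e = (\<Sum>j\<in>J. c j * Y j t e)" for t e
      have rowlin: "rowv z x = (\<Sum>j\<in>J. c j * rowv (Y j) x)" for x
        unfolding rowv_def z_def
        using sum_lin[OF finT finJ, of "\<lambda>_. 1" c "\<lambda>j t. Y j t x"] by simp
      have rz: "x \<in> Rw \<Longrightarrow> rowv z x = 0" for x using rows0 rowlin by (simp add: J_def)
      have zsupp: "z t e \<noteq> 0 \<Longrightarrow> 0 < f2 t e" for t e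
      proof -
        assume "z t e \<noteq> 0"
        then obtain j where j: "j \<in> J" "c j * Y j t e \<noteq> 0" unfolding z_def by (blast dest: sum_nz)
        then have t: "t = fst j" and ne: "(ys (fst j) ! snd j) e \<noteq> 0" by (auto simp: Y_def split: if_splits)
        have "fst j \<in> T" "snd j < length (ys (fst j))" using j(1) by (auto simp: J_def)
        then have yin: "ys (fst j) ! snd j \<in> set (ys (fst j))" by simp
        have "\<forall>y\<in>set (ys (fst j)). cons_at V E (fst j) (\<lambda>_. 0) y \<and> (\<forall>e. y e \<noteq> 0 \<longrightarrow> 0 < f2 (fst j) e)"
          using ys \<open>fst j \<in> T\<close> by blast
        then show "0 < f2 t e" using yin ne t by blast
      qed
      have zcons: "cons_at V E t (\<lambda>_. 0) (z t)" if "t \<in> T" for t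
      proof -
        have "\<forall>j\<in>J. cons_at V E t (\<lambda>_. 0) (Y j t)"
        proof
          fix j assume j: "j \<in> J"
          show "cons_at V E t (\<lambda>_. 0) (Y j t)"
          proof (cases "t = fst j")
            case True
            have "fst j \<in> T" "snd j < length (ys (fst j))" using j by (auto simp: J_def)
            then have yin: "ys (fst j) ! snd j \<in> set (ys (fst j))" by simp
            have "\<forall>y\<in>set (ys (fst j)). cons_at V E (fst j) (\<lambda>_. 0) y \<and> (\<forall>e. y e \<noteq> 0 \<longrightarrow> 0 < f2 (fst j) e)"
              using ys \<open>fst j \<in> T\<close> by blast
            then have "cons_at V E (fst j) (\<lambda>_. 0) (ys (fst j) ! snd j)" using yin by blast
            then show ?thesis using True by (simp add: Y_def)
          next
            case False
            then show ?thesis by (simp add: Y_def cons_zero)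
          qed
        qed
        from cons_comb[OF finE finJ this, of c] show ?thesis by (simp add: z_def[abs_def])
      qed
      have finK: "finite (T \<times> E)" using finT finE by simp
      obtain \<epsilon> where eps: "0 < \<epsilon>" "\<forall>x. 0 \<le> f2 (fst x) (snd x) + \<epsilon> * z (fst x) (snd x)
          \<and> 0 \<le> f2 (fst x) (snd x) - \<epsilon> * z (fst x) (snd x)"
      proof -
        have "\<forall>x. z (fst x) (snd x) \<noteq> 0 \<longrightarrow> x \<in> T \<times> E \<and> 0 < f2 (fst x) (snd x)"
        proof (intro allI impI)
          fix x assume "z (fst x) (snd x) \<noteq> 0"
          then have "0 < f2 (fst x) (snd x)" by (rule zsupp)
          then show "x \<in> T \<times> E \<and> 0 < f2 (fst x) (snd x)" using f2pos by (cases x) auto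
        qed
        moreover have "\<forall>x. 0 \<le> f2 (fst x) (snd x)" using f2nn by blast
        ultimately show ?thesis using that eps_exists[OF finK, of "\<lambda>x. z (fst x) (snd x)" "\<lambda>x. f2 (fst x) (snd x)"]
          by blast
      qed
      have mem: "(\<lambda>t e. f2 t e + \<delta> * z t e) \<in> P" if nn: "\<forall>t e. 0 \<le> f2 t e + \<delta> * z t e" for \<delta>
        unfolding P_def lp2_set_def
      proof (intro CollectI conjI allI impI ballI)
        fix t :: 'v and e assume "t \<notin> dst ` {1..M} \<or> e \<notin> E2 Vsw E0"
        then have "f2 t e = 0" using f2z by (simp add: T_def E_def)
        moreover then have "z t e = 0" using zsupp[of t e] by fastforce
        ultimately show "f2 t e + \<delta> * z t e = 0" by simp
      next
        show "conservation Vsw (E2 Vsw E0) (dst ` {1..M}) (d2 Vsw M src dst dem cl C runs1) (\<lambda>t e. f2 t e + \<delta> * z t e)"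
          unfolding conservation_iff
        proof
          fix t :: 'v assume t: "t \<in> dst ` {1..M}"
          have "cons_at V E t (d t) (f2 t)" using f2c t unfolding conservation_iff T_def by blast
          from cons_add_scale[OF this zcons[of t], of \<delta>] t
          show "cons_at Vsw (E2 Vsw E0) t (d2 Vsw M src dst dem cl C runs1 t) (\<lambda>e. f2 t e + \<delta> * z t e)"
            by (simp add: V_def E_def d_def T_def)
        qed
      next
        fix e assume e: "e \<in> E2 Vsw E0"
        have "(\<Sum>t\<in>dst ` {1..M}. f2 t e + \<delta> * z t e)
            = (\<Sum>t\<in>dst ` {1..M}. f2 t e) + \<delta> * rowv z e"
          by (simp add: rowv_def T_def sum.distrib sum_distrib_left)
        moreover have "rowv z e = 0" using rz e by (simp add: Rw_def E_def)
        moreover have "(\<Sum>t\<in>dst ` {1..M}. f2 t e) \<le> gbar Vsw C g f1 e"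
          using f2P e unfolding P_def lp2_set_def by blast
        ultimately show "(\<Sum>t\<in>dst ` {1..M}. f2 t e + \<delta> * z t e) \<le> gbar Vsw C g f1 e"
          by simp
      next
        fix t :: 'v and e show "0 \<le> f2 t e + \<delta> * z t e" using nn by blast
      qed
      have p1: "(\<lambda>t e. f2 t e + \<epsilon> * z t e) \<in> P" using mem eps(2) by simp
      have p2: "(\<lambda>t e. f2 t e - \<epsilon> * z t e) \<in> P" using mem[of "- \<epsilon>"] eps(2) by simp
      have z0: "z k e = 0" using vertex_zero[OF bfs2[folded P_def] p1 p2] eps(1) by simp
      have "z k e = (\<Sum>i<length (ys k). c (k, i) * (ys k ! i) e)"
        unfolding z_def J_def Y_def
        using z_expand[OF finT _ k, where N=id and L="\<lambda>k. length (ys k)" and c=c and G="\<lambda>k i. (ys k ! i) e"]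
        by simp
      then show "(\<Sum>i<length (ys k). c (k, i) * (ys k ! i) e) = 0" using z0 by simp
    qed
  qed
  then show ?thesis by (simp add: T_def Rw_def E_def)
qed



lemma card_facts:
  assumes net: "network Vsw Vpm E0 g b"
  shows "card (E2 Vsw E0) + card (swpm Vsw Vpm E0) + card Vpm \<le> card E0"
proof -
  have finE0: "finite E0" by (rule fin_E0[OF net])
  have disj: "Vsw \<inter> Vpm = {}" using net unfolding network_def by (elim conjE)
  have finVpm: "finite Vpm" using net unfolding network_def by (elim conjE)
  have pm: "\<forall>u\<in>Vpm. \<exists>v\<in>Vsw. {e \<in> E0. fst e = u \<or> snd e = u} = {(u, v), (v, u)}"
    using net unfolding network_def by (elim conjE)
  have "\<forall>u\<in>Vpm. \<exists>v. v \<in> Vsw \<and> {e \<in> E0. fst e = u \<or> snd e = u} = {(u, v), (v, u)}"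
    using pm by (simp add: Bex_def)
  from bchoice[OF this] obtain sw where sw: "\<forall>u\<in>Vpm. sw u \<in> Vsw \<and> {e \<in> E0. fst e = u \<or> snd e = u} = {(u, sw u), (sw u, u)}"
    by (elim exE)
  have swu: "sw u \<in> Vsw \<and> {e \<in> E0. fst e = u \<or> snd e = u} = {(u, sw u), (sw u, u)}" if "u \<in> Vpm" for u
    using bspec[OF sw that] .
  have swV: "sw u \<in> Vsw" if "u \<in> Vpm" for u using swu[OF that] by (elim conjE)
  have swE: "\<And>u. u \<in> Vpm \<Longrightarrow> (u, sw u) \<in> E0 \<and> (sw u, u) \<in> E0"
  proof -
    fix u assume u: "u \<in> Vpm"
    then have "{e \<in> E0. fst e = u \<or> snd e = u} = {(u, sw u), (sw u, u)}" using swu[OF u] by (elim conjE)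
    then have "(u, sw u) \<in> {e \<in> E0. fst e = u \<or> snd e = u}" "(sw u, u) \<in> {e \<in> E0. fst e = u \<or> snd e = u}"
      by simp_all
    then show "(u, sw u) \<in> E0 \<and> (sw u, u) \<in> E0" by simp
  qed
  define A where "A = (\<lambda>u. (u, sw u)) ` Vpm"
  define B where "B = (\<lambda>u. (sw u, u)) ` Vpm"
  have AE: "A \<subseteq> E0" unfolding A_def using swE by blast
  have BE: "B \<subseteq> E0" unfolding B_def using swE by blast
  have E2E: "E2 Vsw E0 \<subseteq> E0" by (auto simp: E2_def)
  have cA: "card A = card Vpm" unfolding A_def by (rule card_image) (auto simp: inj_on_def)
  have cB: "card B = card Vpm" unfolding B_def by (rule card_image) (auto simp: inj_on_def)
  have fA: "finite A" "finite B" "finite (E2 Vsw E0)" using AE BE E2E finE0 by (auto intro: finite_subset)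
  have d1: "E2 Vsw E0 \<inter> A = {}" unfolding A_def E2_def using disj by auto
  have d2: "(E2 Vsw E0 \<union> A) \<inter> B = {}" unfolding A_def B_def E2_def using disj swV by auto
  have "card (E2 Vsw E0 \<union> A \<union> B) = card (E2 Vsw E0) + card A + card B"
    using fA d1 d2 by (simp add: card_Un_disjoint)
  moreover have "card (E2 Vsw E0 \<union> A \<union> B) \<le> card E0"
    using AE BE E2E finE0 by (intro card_mono) auto
  ultimately have c1: "card (E2 Vsw E0) + 2 * card Vpm \<le> card E0" using cA cB by simp
  define h where "h v = (SOME u. u \<in> Vpm \<and> (v, u) \<in> E0)" for v
  have hV: "h v \<in> Vpm \<and> (v, h v) \<in> E0" if "v \<in> swpm Vsw Vpm E0" for v
  proof -
    have "\<exists>u. u \<in> Vpm \<and> (v, u) \<in> E0" using that unfolding swpm_def by blast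
    then show ?thesis unfolding h_def by (rule someI_ex)
  qed
  have "inj_on h (swpm Vsw Vpm E0)"
  proof (rule inj_onI)
    fix v1 v2 assume v: "v1 \<in> swpm Vsw Vpm E0" "v2 \<in> swpm Vsw Vpm E0" "h v1 = h v2"
    define u where "u = h v1"
    have u: "u \<in> Vpm" "(v1, u) \<in> E0" "(v2, u) \<in> E0" using hV[OF v(1)] hV[OF v(2)] v(3) by (auto simp: u_def)
    have vs: "v1 \<in> Vsw" "v2 \<in> Vsw" using v(1,2) by (auto simp: swpm_def)
    have s: "{e \<in> E0. fst e = u \<or> snd e = u} = {(u, sw u), (sw u, u)}" using swu[OF u(1)] by (elim conjE)
    have "(v1, u) \<in> {e \<in> E0. fst e = u \<or> snd e = u}" "(v2, u) \<in> {e \<in> E0. fst e = u \<or> snd e = u}"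
      using u by simp_all
    then have "(v1, u) \<in> {(u, sw u), (sw u, u)}" "(v2, u) \<in> {(u, sw u), (sw u, u)}" unfolding s .
    moreover have "v1 \<noteq> u" "v2 \<noteq> u" using vs u(1) disj by auto
    ultimately show "v1 = v2" by auto
  qed
  moreover have "h ` swpm Vsw Vpm E0 \<subseteq> Vpm" using hV by blast
  ultimately have c2: "card (swpm Vsw Vpm E0) \<le> card Vpm" using finVpm by (meson card_inj_on_le)
  show ?thesis using c1 c2 by linarith
qed

theorem theorem1:
  fixes Vsw Vpm :: "'v set" and E0 :: "('v \<times> 'v) set"
    and g :: "'v \<times> 'v \<Rightarrow> real" and b :: "'v \<Rightarrow> real"
    and M :: nat and src dst :: "nat \<Rightarrow> 'v" and dem :: "nat \<Rightarrow> real" and cl :: "nat \<Rightarrow> nat"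
    and C :: nat and p :: "nat \<Rightarrow> real"
    and f1 :: "'v node1 \<Rightarrow> 'v node1 \<times> 'v node1 \<Rightarrow> real"
    and runs1 :: "nat \<Rightarrow> (('v node1 \<times> 'v node1) set \<times> ('v node1 \<Rightarrow> real)) list"
    and f2 :: "'v \<Rightarrow> 'v \<times> 'v \<Rightarrow> real"
    and runs2 :: "'v \<Rightarrow> (('v \<times> 'v) set \<times> ('v \<Rightarrow> real)) list"
  assumes net: "network Vsw Vpm E0 g b"
    and com: "commodities Vsw M src dst dem cl C p"
    and bfs1: "is_vertex (lp1_set Vsw Vpm E0 g b M src dem cl C p) f1"
    and trees1: "\<forall>k\<in>{1..C}. flow2trees (V1 Vsw C) (E1 Vsw Vpm E0 C) (Pn k)
                              (f1 (Pn k)) (d1 M src dem cl (Pn k)) (runs1 k)"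
    and bfs2: "is_vertex (lp2_set Vsw (E2 Vsw E0) (dst ` {1..M})
                             (d2 Vsw M src dst dem cl C runs1) (gbar Vsw C g f1)) f2"
    and trees2: "\<forall>t\<in>dst ` {1..M}. flow2trees Vsw (E2 Vsw E0) t (f2 t)
                              (d2 Vsw M src dst dem cl C runs1 t) (runs2 t)"
  shows "int (\<Sum>k\<in>{1..C}. length (runs1 k)) + int (\<Sum>t\<in>dst ` {1..M}. length (runs2 t))
           \<le> int C + 2 * int (card E0) + int (card (dst ` {1..M})) - 2 * int (card Vpm)"
proof -
  have a: "(\<Sum>k\<in>{1..C}. length (runs1 k)) \<le> card (E2 Vsw E0) + 2 * card (swpm Vsw Vpm E0) + C"
    by (rule step1_bound[OF net com bfs1 trees1])
  have b: "(\<Sum>t\<in>dst ` {1..M}. length (runs2 t)) \<le> card (E2 Vsw E0) + card (dst ` {1..M})"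
    by (rule step2_bound[OF net com trees1 bfs2 trees2])
  have c: "card (E2 Vsw E0) + card (swpm Vsw Vpm E0) + card Vpm \<le> card E0"
    by (rule card_facts[OF net])
  show ?thesis using a b c by linarith
qed



end
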